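(* Let $M$ be a uniformly discrete pointed metric space. Then every preserved extreme point of $B_{\mathcal F(M)}$ is a strongly exposed point of $B_{\mathcal F(M)}$.
   Context: A pointed metric space $M$ has a distinguished origin $0$; it is uniformly discrete if $\inf\{d(u,v):u\neq v\}>0$. $\mathrm{Lip}_0(M)$ is the Banach space of real Lipschitz functions on $M$ vanishing at $0$ with the best Lipschitz constant as norm; $\delta(x)$ is evaluation at $x$, and the Lipschitz free space $\mathcal F(M)$ is the closed linear span of $\delta(M)$ in $\mathrm{Lip}_0(M)^*$, with $\mathcal F(M)^*=\mathrm{Lip}_0(M)$. A point of $B_X$ ($X$ a Banach space) is a preserved extreme point if it is an extreme point of $B_{X^{**}}$. A point $x\in B_X$ is strongly exposed if there is $f\in X^*$ with $f(x)=\|f\|$ such that every sequence $(x_n)\subset B_X$ with $f(x_n)\to f(x)$ converges in norm to $x$. *)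

theory Defs
  imports "HOL-Analysis.Analysis"
begin

text \<open>The pointed metric space M is the type 'a (a metric space) with origin z.\<close>

definition uniformly_discrete :: "'a::metric_space itself \<Rightarrow> bool" where
  "uniformly_discrete _ \<longleftrightarrow> (\<exists>\<theta>>0. \<forall>u v::'a. u \<noteq> v \<longrightarrow> \<theta> \<le> dist u v)"

definition lip0 :: "'a::metric_space \<Rightarrow> ('a \<Rightarrow> real) set" where
  "lip0 z = {f. f z = 0 \<and> (\<exists>L. \<forall>x y. \<bar>f x - f y\<bar> \<le> L * dist x y)}"

text \<open>Best Lipschitz constant (0 for a one-point space).\<close>
definition lipnorm :: "('a::metric_space \<Rightarrow> real) \<Rightarrow> real" where
  "lipnorm f = Sup ({0} \<union> {\<bar>f x - f y\<bar> / dist x y | x y. x \<noteq> y})"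

text \<open>Lip_0(M)^*: bounded linear functionals on Lip_0(M), normalised to be 0 off Lip_0(M).\<close>
definition lipdual :: "'a::metric_space \<Rightarrow> (('a \<Rightarrow> real) \<Rightarrow> real) set" where
  "lipdual z = {\<phi>.
     (\<forall>f\<in>lip0 z. \<forall>g\<in>lip0 z. \<forall>a b. \<phi> (\<lambda>x. a * f x + b * g x) = a * \<phi> f + b * \<phi> g) \<and>
     (\<exists>C. \<forall>f\<in>lip0 z. \<bar>\<phi> f\<bar> \<le> C * lipnorm f) \<and>
     (\<forall>f. f \<notin> lip0 z \<longrightarrow> \<phi> f = 0)}"

definition dualnorm :: "'a::metric_space \<Rightarrow> (('a \<Rightarrow> real) \<Rightarrow> real) \<Rightarrow> real" where
  "dualnorm z \<phi> = Sup ({0} \<union> {\<bar>\<phi> f\<bar> | f. f \<in> lip0 z \<and> lipnorm f \<le> 1})"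

definition delta :: "'a::metric_space \<Rightarrow> 'a \<Rightarrow> ('a \<Rightarrow> real) \<Rightarrow> real" where
  "delta z x = (\<lambda>f. if f \<in> lip0 z then f x else 0)"

definition delta_span :: "'a::metric_space \<Rightarrow> (('a \<Rightarrow> real) \<Rightarrow> real) set" where
  "delta_span z = {\<nu>. \<exists>(n::nat) (c::nat \<Rightarrow> real) (p::nat \<Rightarrow> 'a).
       \<nu> = (\<lambda>f. \<Sum>i<n. c i * delta z (p i) f)}"

text \<open>The Lipschitz free space: closed linear span of delta(M) in Lip_0(M)^*.\<close>
definition free :: "'a::metric_space \<Rightarrow> (('a \<Rightarrow> real) \<Rightarrow> real) set" where
  "free z = {\<mu> \<in> lipdual z. \<forall>\<epsilon>>0. \<exists>\<nu>\<in>delta_span z. dualnorm z (\<lambda>f. \<mu> f - \<nu> f) < \<epsilon>}"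

definition dual_ball :: "'a::metric_space \<Rightarrow> (('a \<Rightarrow> real) \<Rightarrow> real) set" where
  "dual_ball z = {\<phi> \<in> lipdual z. dualnorm z \<phi> \<le> 1}"

definition free_ball :: "'a::metric_space \<Rightarrow> (('a \<Rightarrow> real) \<Rightarrow> real) set" where
  "free_ball z = free z \<inter> dual_ball z"

definition extreme_pt :: "(('a \<Rightarrow> real) \<Rightarrow> real) set \<Rightarrow> (('a \<Rightarrow> real) \<Rightarrow> real) \<Rightarrow> bool" where
  "extreme_pt K \<mu> \<longleftrightarrow> \<mu> \<in> K \<and>
     (\<forall>a\<in>K. \<forall>b\<in>K. \<mu> = (\<lambda>f. (a f + b f) / 2) \<longrightarrow> a = b)"

text \<open>Preserved extreme point: extreme point of the bidual ball. Via F(M)^* = Lip_0(M)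
  isometrically, F(M)^** = Lip_0(M)^* and the canonical embedding is the inclusion.\<close>
definition preserved_extreme :: "'a::metric_space \<Rightarrow> (('a \<Rightarrow> real) \<Rightarrow> real) \<Rightarrow> bool" where
  "preserved_extreme z \<mu> \<longleftrightarrow> \<mu> \<in> free_ball z \<and> extreme_pt (dual_ball z) \<mu>"

text \<open>Strongly exposed point of B_F(M); functionals on F(M) are given by f in Lip_0(M).\<close>
definition strongly_exposed :: "'a::metric_space \<Rightarrow> (('a \<Rightarrow> real) \<Rightarrow> real) \<Rightarrow> bool" where
  "strongly_exposed z \<mu> \<longleftrightarrow> \<mu> \<in> free_ball z \<and>
     (\<exists>g\<in>lip0 z. \<mu> g = lipnorm g \<and>
        (\<forall>s::nat \<Rightarrow> (('a \<Rightarrow> real) \<Rightarrow> real). (\<forall>n. s n \<in> free_ball z) \<longrightarrow>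
            (\<lambda>n. s n g) \<longlonglongrightarrow> \<mu> g \<longrightarrow>
            (\<lambda>n. dualnorm z (\<lambda>f. s n f - \<mu> f)) \<longlonglongrightarrow> 0))"

end

theory Submission
  imports Defs
begin

lemma lip0_bdd:
  assumes "f \<in> lip0 z"
  shows "bdd_above ({0} \<union> {\<bar>f x - f y\<bar> / dist x y | x y. x \<noteq> y})"
proof -
  from assms obtain L where L: "\<forall>x y. \<bar>f x - f y\<bar> \<le> L * dist x y" by (auto simp: lip0_def)
  show ?thesis
  proof (rule bdd_aboveI[where M="max L 0"])
    fix t assume "t \<in> {0} \<union> {\<bar>f x - f y\<bar> / dist x y | x y. x \<noteq> y}"
    then show "t \<le> max L 0"
    proof
      assume "t \<in> {0}" thus ?thesis by simp
    next
      assume "t \<in> {\<bar>f x - f y\<bar> / dist x y | x y. x \<noteq> y}"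
      then obtain x y where t: "t = \<bar>f x - f y\<bar> / dist x y" "x \<noteq> y" by blast
      have "dist x y > 0" using t by simp
      hence "t \<le> L" using L[rule_format, of x y] t by (simp add: pos_divide_le_eq)
      thus ?thesis by simp
    qed
  qed
qed

lemma lipnorm_nonneg: "f \<in> lip0 z \<Longrightarrow> 0 \<le> lipnorm f"
  unfolding lipnorm_def by (rule cSup_upper[OF _ lip0_bdd]) auto

lemma lipnorm_le: assumes "f \<in> lip0 z" shows "\<bar>f x - f y\<bar> \<le> lipnorm f * dist x y"
proof (cases "x = y")
  case True thus ?thesis by simp
next
  case False
  have "\<bar>f x - f y\<bar> / dist x y \<le> lipnorm f"
    unfolding lipnorm_def by (rule cSup_upper[OF _ lip0_bdd[OF assms]]) (use False in blast)
  thus ?thesis using False by (simp add: pos_divide_le_eq)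
qed

lemma lipnorm_least:
  assumes "\<And>x y. x \<noteq> y \<Longrightarrow> \<bar>f x - f y\<bar> \<le> L * dist x y" "0 \<le> L"
  shows "lipnorm f \<le> L"
  unfolding lipnorm_def
  by (rule cSup_least) (auto simp: pos_divide_le_eq assms)

lemma lipnorm_ge:
  assumes "f \<in> lip0 z" "x \<noteq> y"
  shows "\<bar>f x - f y\<bar> / dist x y \<le> lipnorm f"
  unfolding lipnorm_def by (rule cSup_upper[OF _ lip0_bdd[OF assms(1)]]) (use assms in blast)

lemma lip0_I: "f z = 0 \<Longrightarrow> (\<And>x y. \<bar>f x - f y\<bar> \<le> L * dist x y) \<Longrightarrow> f \<in> lip0 z"
  by (auto simp: lip0_def)

lemma lip0_zero: "f \<in> lip0 z \<Longrightarrow> f z = 0"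
  by (auto simp: lip0_def)

lemma comb_bound:
  fixes a b uu vv :: real
  shows "abs (a*uu + b * vv) \<le> abs a * abs uu + abs b * abs vv"
  by (metis abs_mult abs_triangle_ineq)

lemma lip0_comb_le:
  assumes "f \<in> lip0 z" "g \<in> lip0 z"
  shows "\<bar>(a*f x + b*g x) - (a*f y + b*g y)\<bar> \<le> (\<bar>a\<bar> *lipnorm f + \<bar>b\<bar> *lipnorm g) * dist x y"
proof -
  have "\<bar>(a*f x + b*g x) - (a*f y + b*g y)\<bar> = \<bar>a*(f x - f y) + b*(g x - g y)\<bar>"
    by (simp add: algebra_simps)
  also have "\<dots> \<le> \<bar>a\<bar> * \<bar>f x - f y\<bar> + \<bar>b\<bar> * \<bar>g x - g y\<bar>" by (rule comb_bound)
  also have "\<dots> \<le> \<bar>a\<bar> *(lipnorm f * dist x y) + \<bar>b\<bar> *(lipnorm g * dist x y)"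
    by (intro add_mono mult_left_mono lipnorm_le[OF assms(1)] lipnorm_le[OF assms(2)]) auto
  finally show ?thesis by (simp add: algebra_simps)
qed

lemma lip0_comb:
  assumes "f \<in> lip0 z" "g \<in> lip0 z"
  shows "(\<lambda>x. a*f x + b*g x) \<in> lip0 z"
  by (rule lip0_I[OF _ lip0_comb_le[OF assms]]) (simp add: lip0_zero[OF assms(1)] lip0_zero[OF assms(2)])

lemma lipnorm_comb:
  assumes "f \<in> lip0 z" "g \<in> lip0 z"
  shows "lipnorm (\<lambda>x. a*f x + b*g x) \<le> \<bar>a\<bar> *lipnorm f + \<bar>b\<bar> *lipnorm g"
  by (rule lipnorm_least[OF lip0_comb_le[OF assms]])
     (simp add: lipnorm_nonneg[OF assms(1)] lipnorm_nonneg[OF assms(2)])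

lemma lip0_scale: "f \<in> lip0 z \<Longrightarrow> (\<lambda>x. a*f x) \<in> lip0 z"
  using lip0_comb[of f z f a 0] by simp

lemma lipnorm_scale: "f \<in> lip0 z \<Longrightarrow> lipnorm (\<lambda>x. a*f x) \<le> \<bar>a\<bar> * lipnorm f"
  using lipnorm_comb[of f z f a 0] by simp

lemma lip0_diff: "f \<in> lip0 z \<Longrightarrow> g \<in> lip0 z \<Longrightarrow> (\<lambda>x. f x - g x) \<in> lip0 z"
  using lip0_comb[of f z g 1 "-1"] by simp

lemma lip0_add: "f \<in> lip0 z \<Longrightarrow> g \<in> lip0 z \<Longrightarrow> (\<lambda>x. f x + g x) \<in> lip0 z"
  using lip0_comb[of f z g 1 1] by simp

lemma lip0_const0: "(\<lambda>x. 0) \<in> lip0 z"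
  by (rule lip0_I[of _ _ 0]) auto

lemma lipdual_lin: "\<phi> \<in> lipdual z \<Longrightarrow> f \<in> lip0 z \<Longrightarrow> g \<in> lip0 z \<Longrightarrow>
   \<phi> (\<lambda>x. a*f x + b*g x) = a*\<phi> f + b*\<phi> g"
  by (auto simp: lipdual_def)

lemma lipdual_out: "\<phi> \<in> lipdual z \<Longrightarrow> f \<notin> lip0 z \<Longrightarrow> \<phi> f = 0"
  by (auto simp: lipdual_def)

lemma lipdual_scale: "\<phi> \<in> lipdual z \<Longrightarrow> f \<in> lip0 z \<Longrightarrow> \<phi> (\<lambda>x. a*f x) = a*\<phi> f"
  using lipdual_lin[of \<phi> z f f a 0] by simp

lemma lipdual_add: "\<phi> \<in> lipdual z \<Longrightarrow> f \<in> lip0 z \<Longrightarrow> g \<in> lip0 z \<Longrightarrow>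
   \<phi> (\<lambda>x. f x + g x) = \<phi> f + \<phi> g"
  using lipdual_lin[of \<phi> z f g 1 1] by simp

lemma lipdual_diff: "\<phi> \<in> lipdual z \<Longrightarrow> f \<in> lip0 z \<Longrightarrow> g \<in> lip0 z \<Longrightarrow>
   \<phi> (\<lambda>x. f x - g x) = \<phi> f - \<phi> g"
  using lipdual_lin[of \<phi> z f g 1 "-1"] by simp

lemma lipdual_zero: "\<phi> \<in> lipdual z \<Longrightarrow> \<phi> (\<lambda>x. 0) = 0"
  using lipdual_scale[of \<phi> z "\<lambda>x. 0" 0] lip0_const0[of z] by simp

lemma lipnorm_zero_imp:
  assumes "f \<in> lip0 z" "lipnorm f = 0"
  shows "f = (\<lambda>x. 0)"
proof
  fix x
  have "\<bar>f x - f z\<bar> \<le> 0" using lipnorm_le[OF assms(1), of x z] assms(2) by simp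
  thus "f x = 0" using lip0_zero[OF assms(1)] by simp
qed

lemma dualnorm_bdd:
  assumes "\<phi> \<in> lipdual z"
  shows "bdd_above ({0} \<union> {\<bar>\<phi> f\<bar> | f. f \<in> lip0 z \<and> lipnorm f \<le> 1})"
proof -
  from assms obtain C where C: "\<forall>f\<in>lip0 z. \<bar>\<phi> f\<bar> \<le> C * lipnorm f" by (auto simp: lipdual_def)
  show ?thesis
  proof (rule bdd_aboveI[where M="max C 0"])
    fix t assume "t \<in> {0} \<union> {\<bar>\<phi> f\<bar> | f. f \<in> lip0 z \<and> lipnorm f \<le> 1}"
    then show "t \<le> max C 0"
    proof
      assume "t \<in> {0}" thus ?thesis by simp
    next
      assume "t \<in> {\<bar>\<phi> f\<bar> | f. f \<in> lip0 z \<and> lipnorm f \<le> 1}"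
      then obtain f where t: "t = \<bar>\<phi> f\<bar>" "f \<in> lip0 z" "lipnorm f \<le> 1" by blast
      have "C * lipnorm f \<le> max C 0 * lipnorm f"
        by (intro mult_right_mono lipnorm_nonneg[OF t(2)]) simp
      also have "\<dots> \<le> max C 0" using t(3) lipnorm_nonneg[OF t(2)]
        by (simp add: mult_left_le)
      finally show ?thesis using C t by fastforce
    qed
  qed
qed

lemma dualnorm_nonneg: "\<phi> \<in> lipdual z \<Longrightarrow> 0 \<le> dualnorm z \<phi>"
  unfolding dualnorm_def by (rule cSup_upper[OF _ dualnorm_bdd]) auto

lemma dualnorm_ge1: "\<phi> \<in> lipdual z \<Longrightarrow> f \<in> lip0 z \<Longrightarrow> lipnorm f \<le> 1 \<Longrightarrow> \<bar>\<phi> f\<bar> \<le> dualnorm z \<phi>"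
  unfolding dualnorm_def by (rule cSup_upper[OF _ dualnorm_bdd]) auto

lemma lipdual_bound:
  assumes "\<phi> \<in> lipdual z" "f \<in> lip0 z"
  shows "\<bar>\<phi> f\<bar> \<le> dualnorm z \<phi> * lipnorm f"
proof (cases "lipnorm f = 0")
  case True
  hence "f = (\<lambda>x. 0)" by (rule lipnorm_zero_imp[OF assms(2)])
  thus ?thesis using lipdual_zero[OF assms(1)] True by simp
next
  case False
  define L where "L = lipnorm f"
  have L: "L > 0" using False lipnorm_nonneg[OF assms(2)] unfolding L_def by simp
  have "lipnorm (\<lambda>x. (1/L)*f x) \<le> \<bar>1/L\<bar> * lipnorm f" by (rule lipnorm_scale[OF assms(2)])
  also have "\<dots> = 1" using L by (simp add: L_def)
  finally have "\<bar>\<phi> (\<lambda>x. (1/L)*f x)\<bar> \<le> dualnorm z \<phi>"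
    by (intro dualnorm_ge1 assms lip0_scale)
  hence "\<bar>\<phi> f\<bar> / L \<le> dualnorm z \<phi>" using lipdual_scale[OF assms, of "1/L"] L by simp
  thus ?thesis using L by (simp add: L_def pos_divide_le_eq)
qed

lemma dualnorm_le:
  assumes "0 \<le> C" "\<And>f. f \<in> lip0 z \<Longrightarrow> \<bar>\<phi> f\<bar> \<le> C * lipnorm f"
  shows "dualnorm z \<phi> \<le> C"
  unfolding dualnorm_def
proof (rule cSup_least)
  fix t assume "t \<in> {0} \<union> {\<bar>\<phi> f\<bar> | f. f \<in> lip0 z \<and> lipnorm f \<le> 1}"
  then show "t \<le> C"
  proof
    assume "t \<in> {0}" thus ?thesis using assms by simp
  next
    assume "t \<in> {\<bar>\<phi> f\<bar> | f. f \<in> lip0 z \<and> lipnorm f \<le> 1}"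
    then obtain f where t: "t = \<bar>\<phi> f\<bar>" "f \<in> lip0 z" "lipnorm f \<le> 1" by blast
    have "\<bar>\<phi> f\<bar> \<le> C * lipnorm f" using assms t by blast
    also have "\<dots> \<le> C" using t(3) assms(1) by (simp add: mult_left_le)
    finally show ?thesis using t by simp
  qed
qed simp

lemma lipdualI:
  assumes "\<And>f g a b. f \<in> lip0 z \<Longrightarrow> g \<in> lip0 z \<Longrightarrow> \<phi> (\<lambda>x. a*f x + b*g x) = a*\<phi> f + b*\<phi> g"
    "\<And>f. f \<in> lip0 z \<Longrightarrow> \<bar>\<phi> f\<bar> \<le> C * lipnorm f"
    "\<And>f. f \<notin> lip0 z \<Longrightarrow> \<phi> f = 0"
  shows "\<phi> \<in> lipdual z"
  unfolding lipdual_def using assms by blast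

lemma lipdual_comb:
  assumes "A \<in> lipdual z" "B \<in> lipdual z"
  shows "(\<lambda>f. a * A f + b * B f) \<in> lipdual z"
proof (rule lipdualI[where C="\<bar>a\<bar> *dualnorm z A + \<bar>b\<bar> *dualnorm z B"])
  fix f g :: "'a \<Rightarrow> real" and c d :: real assume fg: "f \<in> lip0 z" "g \<in> lip0 z"
  show "a * A (\<lambda>x. c * f x + d * g x) + b * B (\<lambda>x. c * f x + d * g x) =
        c * (a * A f + b * B f) + d * (a * A g + b * B g)"
    using lipdual_lin[OF assms(1) fg] lipdual_lin[OF assms(2) fg] by (simp add: algebra_simps)
next
  fix f :: "'a \<Rightarrow> real" assume f: "f \<in> lip0 z"
  have "\<bar>a * A f + b * B f\<bar> \<le> \<bar>a\<bar> * \<bar>A f\<bar> + \<bar>b\<bar> * \<bar>B f\<bar>" by (rule comb_bound)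
  also have "\<dots> \<le> \<bar>a\<bar> *(dualnorm z A * lipnorm f) + \<bar>b\<bar> *(dualnorm z B * lipnorm f)"
    by (intro add_mono mult_left_mono lipdual_bound assms f) auto
  finally show "\<bar>a * A f + b * B f\<bar> \<le> (\<bar>a\<bar> *dualnorm z A + \<bar>b\<bar> *dualnorm z B) * lipnorm f"
    by (simp add: algebra_simps)
next
  fix f :: "'a \<Rightarrow> real" assume "f \<notin> lip0 z"
  thus "a * A f + b * B f = 0" using lipdual_out[OF assms(1)] lipdual_out[OF assms(2)] by simp
qed


definition lincl :: "(('w \<Rightarrow> real) \<times> real) set \<Rightarrow> bool" where
  "lincl G \<longleftrightarrow> (\<forall>h a k b s t. (h,a) \<in> G \<longrightarrow> (k,b) \<in> G \<longrightarrow>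
      ((\<lambda>w. s * h w + t * k w), s * a + t * b) \<in> G)"

lemma lincl_D:
  "lincl G \<Longrightarrow> (h,a)\<in>G \<Longrightarrow> (k,b)\<in>G \<Longrightarrow> f = (\<lambda>w. s * h w + t * k w) \<Longrightarrow> e = s * a + t * b
   \<Longrightarrow> (f,e)\<in>G"
  unfolding lincl_def by blast

lemma hahn_banach:
  fixes X :: "('w \<Rightarrow> real) set" and p :: "('w \<Rightarrow> real) \<Rightarrow> real"
    and G0 :: "(('w \<Rightarrow> real) \<times> real) set"
  assumes Xlin: "\<And>h k s t. h\<in>X \<Longrightarrow> k\<in>X \<Longrightarrow> (\<lambda>w. s * h w + t * k w) \<in> X"
  and psub: "\<And>h k. h\<in>X \<Longrightarrow> k\<in>X \<Longrightarrow> p (\<lambda>w. h w + k w) \<le> p h + p k"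
  and phom: "\<And>h t. h\<in>X \<Longrightarrow> 0 \<le> t \<Longrightarrow> p (\<lambda>w. t * h w) = t * p h"
  and G0lin: "lincl G0"
  and G0X: "\<And>h a. (h,a)\<in>G0 \<Longrightarrow> h \<in> X \<and> a \<le> p h"
  and G0ne: "G0 \<noteq> {}"
  shows "\<exists>\<Lambda>. (\<forall>h\<in>X. \<Lambda> h \<le> p h) \<and>
     (\<forall>h\<in>X. \<forall>k\<in>X. \<forall>s t. \<Lambda> (\<lambda>w. s * h w + t * k w) = s * \<Lambda> h + t * \<Lambda> k) \<and>
     (\<forall>h a. (h,a)\<in>G0 \<longrightarrow> \<Lambda> h = a)"
proof -
  define A where "A = {G. G0 \<subseteq> G \<and> lincl G \<and> (\<forall>h a. (h,a)\<in>G \<longrightarrow> h\<in>X \<and> a \<le> p h)}"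
  obtain h1 a1 where h1: "(h1,a1) \<in> G0" using G0ne by auto
  have h1X: "h1 \<in> X" using G0X[OF h1] by simp
  have p0: "p (\<lambda>w. 0) = 0" using phom[OF h1X, of 0] by simp
  have zX: "(\<lambda>w. 0) \<in> X" using Xlin[OF h1X h1X, of 0 0] by simp
  have "\<exists>M\<in>A. \<forall>G\<in>A. M \<subseteq> G \<longrightarrow> G = M"
  proof (rule Zorn_Lemma2, intro ballI)
    fix C assume C: "C \<in> chains A"
    show "\<exists>U\<in>A. \<forall>G\<in>C. G \<subseteq> U"
    proof (cases "C = {}")
      case True
      have "G0 \<in> A" unfolding A_def using G0lin G0X by blast
      thus ?thesis using True by blast
    next
      case False
      then obtain G1 where G1: "G1 \<in> C" by blast
      have CA: "C \<subseteq> A" and Cch: "\<And>G G'. G\<in>C \<Longrightarrow> G'\<in>C \<Longrightarrow> G \<subseteq> G' \<or> G' \<subseteq> G"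
        using C unfolding chains_def chain_subset_def by blast+
      have "\<Union>C \<in> A"
        unfolding A_def
      proof (intro CollectI conjI allI impI)
        show "G0 \<subseteq> \<Union>C" using G1 CA unfolding A_def by blast
      next
        show "lincl (\<Union>C)"
          unfolding lincl_def
        proof (intro allI impI)
          fix h a k b s t assume "(h,a) \<in> \<Union>C" "(k,b) \<in> \<Union>C"
          then obtain G G' where GG: "G\<in>C" "G'\<in>C" "(h,a)\<in>G" "(k,b)\<in>G'" by blast
          from Cch[OF GG(1,2)] show "((\<lambda>w. s * h w + t * k w), s * a + t * b) \<in> \<Union>C"
          proof
            assume "G \<subseteq> G'"
            hence "((\<lambda>w. s * h w + t * k w), s * a + t * b) \<in> G'"
              using GG CA unfolding A_def lincl_def by blast
            thus ?thesis using GG by blast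
          next
            assume "G' \<subseteq> G"
            hence "((\<lambda>w. s * h w + t * k w), s * a + t * b) \<in> G"
              using GG CA unfolding A_def lincl_def by blast
            thus ?thesis using GG by blast
          qed
        qed
      next
        fix h a assume "(h,a) \<in> \<Union>C"
        thus "h \<in> X" "a \<le> p h" using CA unfolding A_def by blast+
      qed
      thus ?thesis by blast
    qed
  qed
  then obtain M where MA: "M\<in>A" and Mmax: "\<And>G. G\<in>A \<Longrightarrow> M \<subseteq> G \<Longrightarrow> G = M" by blast
  have Mlin: "lincl M" and G0M: "G0 \<subseteq> M" and MX: "\<And>h a. (h,a)\<in>M \<Longrightarrow> h\<in>X \<and> a \<le> p h"
    using MA unfolding A_def by blast+
  have h1M: "(h1,a1) \<in> M" using h1 G0M by blast
  have zM: "((\<lambda>w. 0), 0) \<in> M" by (rule lincl_D[OF Mlin h1M h1M, of _ 0 0]) auto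
  have func: "a = b" if "(h,a)\<in>M" "(h,b)\<in>M" for h a b
  proof -
    have "((\<lambda>w. 0), a - b) \<in> M" by (rule lincl_D[OF Mlin that, of _ 1 "-1"]) auto
    hence 1: "a - b \<le> 0" using MX p0 by fastforce
    have "((\<lambda>w. 0), b - a) \<in> M" by (rule lincl_D[OF Mlin that(2,1), of _ 1 "-1"]) auto
    hence 2: "b - a \<le> 0" using MX p0 by fastforce
    show ?thesis using 1 2 by simp
  qed
  have full: "\<exists>c. (h0,c) \<in> M" if h0X: "h0 \<in> X" for h0
  proof (rule ccontr)
    assume nh: "\<not> (\<exists>c. (h0,c) \<in> M)"
    have key: "a - p (\<lambda>w. h w - h0 w) \<le> p (\<lambda>w. k w + h0 w) - b"
      if "(h,a)\<in>M" "(k,b)\<in>M" for h a k b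
    proof -
      have "((\<lambda>w. h w + k w), a + b) \<in> M" by (rule lincl_D[OF Mlin that, of _ 1 1]) auto
      hence "a + b \<le> p (\<lambda>w. h w + k w)" using MX by blast
      also have "(\<lambda>w. h w + k w) = (\<lambda>w. (h w - h0 w) + (k w + h0 w))" by auto
      also have "p \<dots> \<le> p (\<lambda>w. h w - h0 w) + p (\<lambda>w. k w + h0 w)"
      proof (rule psub)
        show "(\<lambda>w. h w - h0 w) \<in> X" using Xlin[OF _ h0X, of h 1 "-1"] MX that by auto
        show "(\<lambda>w. k w + h0 w) \<in> X" using Xlin[OF _ h0X, of k 1 1] MX that by auto
      qed
      finally show ?thesis by simp
    qed
    define c where "c = Sup {a - p (\<lambda>w. h w - h0 w) | h a. (h,a)\<in>M}"
    have c_ge: "a - p (\<lambda>w. h w - h0 w) \<le> c" if "(h,a)\<in>M" for h a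
      unfolding c_def
    proof (rule cSup_upper)
      show "a - p (\<lambda>w. h w - h0 w) \<in> {a - p (\<lambda>w. h w - h0 w) | h a. (h,a)\<in>M}" using that by blast
      show "bdd_above {a - p (\<lambda>w. h w - h0 w) | h a. (h,a)\<in>M}"
        by (rule bdd_aboveI[where M="p (\<lambda>w. h1 w + h0 w) - a1"]) (use key h1M in blast)
    qed
    have c_le: "c \<le> p (\<lambda>w. k w + h0 w) - b" if "(k,b)\<in>M" for k b
      unfolding c_def
      by (rule cSup_least) (use h1M key that in blast)+
    define M' where "M' = {((\<lambda>w. h w + t * h0 w), a + t * c) | h a t. (h,a)\<in>M}"
    have M'I: "((\<lambda>w. h w + t * h0 w), a + t * c) \<in> M'" if "(h,a)\<in>M" for h a t
      unfolding M'_def using that by blast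
    have MM': "M \<subseteq> M'"
    proof
      fix x assume "x \<in> M"
      then obtain h a where x: "x = (h,a)" "(h,a)\<in>M" by (cases x) auto
      have "((\<lambda>w. h w + 0 * h0 w), a + 0 * c) \<in> M'" unfolding M'_def using x by blast
      thus "x \<in> M'" using x by simp
    qed
    have "M' \<in> A"
      unfolding A_def
    proof (intro CollectI conjI allI impI)
      show "G0 \<subseteq> M'" using G0M MM' by blast
    next
      show "lincl M'"
        unfolding lincl_def
      proof (intro allI impI)
        fix f a k b s t assume "(f,a) \<in> M'" "(k,b) \<in> M'"
        then obtain h1 a1 t1 h2 a2 t2 where e: "f = (\<lambda>w. h1 w + t1 * h0 w)" "a = a1 + t1 * c" "(h1,a1)\<in>M"
            "k = (\<lambda>w. h2 w + t2 * h0 w)" "b = a2 + t2 * c" "(h2,a2)\<in>M"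
          unfolding M'_def by blast
        have m: "((\<lambda>w. s * h1 w + t * h2 w), s * a1 + t * a2) \<in> M"
          by (rule lincl_D[OF Mlin e(3) e(6)]) auto
        have "((\<lambda>w. (\<lambda>w. s * h1 w + t * h2 w) w + (s*t1 + t*t2) * h0 w),
               (s * a1 + t * a2) + (s*t1 + t*t2) * c) \<in> M'"
          by (rule M'I[OF m])
        moreover have "(\<lambda>w. (\<lambda>w. s * h1 w + t * h2 w) w + (s*t1 + t*t2) * h0 w) = (\<lambda>w. s * f w + t * k w)"
          using e by (auto simp: algebra_simps)
        moreover have "(s * a1 + t * a2) + (s*t1 + t*t2) * c = s * a + t * b"
          using e by (simp add: algebra_simps)
        ultimately show "((\<lambda>w. s * f w + t * k w), s * a + t * b) \<in> M'" by simp
      qed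
    next
      fix f e assume "(f,e) \<in> M'"
      then obtain h a t where e: "f = (\<lambda>w. h w + t * h0 w)" "e = a + t * c" "(h,a)\<in>M"
        unfolding M'_def by blast
      have hX: "h \<in> X" using MX e by blast
      show "f \<in> X" using Xlin[OF hX h0X, of 1 t] e by simp
      show "e \<le> p f"
      proof (cases t "0::real" rule: linorder_cases)
        case equal thus ?thesis using e MX by simp
      next
        case greater
        have m: "((\<lambda>w. (1/t) * h w + 0 * h w), (1/t) * a + 0 * a) \<in> M"
          by (rule lincl_D[OF Mlin e(3) e(3), of _ "1/t" 0]) auto
        have "c \<le> p (\<lambda>w. ((\<lambda>w. (1/t) * h w + 0 * h w) w + h0 w)) - ((1/t) * a + 0 * a)"
          by (rule c_le[OF m])
        hence "c \<le> p (\<lambda>w. (1/t) * h w + h0 w) - a / t" by simp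
        moreover have "p f = t * p (\<lambda>w. (1/t) * h w + h0 w)"
        proof -
          have "f = (\<lambda>w. t * ((1/t) * h w + h0 w))" using e greater by (auto simp: algebra_simps)
          moreover have "(\<lambda>w. (1/t) * h w + h0 w) \<in> X" using Xlin[OF hX h0X, of "1/t" 1] by simp
          ultimately show ?thesis using phom greater by simp
        qed
        ultimately have "t * c \<le> p f - a" using greater
          by (simp add: field_simps)
        thus ?thesis using e by simp
      next
        case less
        define u where "u = - t"
        have u: "u > 0" using less u_def by simp
        have m: "((\<lambda>w. (1/u) * h w + 0 * h w), (1/u) * a + 0 * a) \<in> M"
          by (rule lincl_D[OF Mlin e(3) e(3), of _ "1/u" 0]) auto
        have "((1/u) * a + 0 * a) - p (\<lambda>w. ((\<lambda>w. (1/u) * h w + 0 * h w) w - h0 w)) \<le> c"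
          by (rule c_ge[OF m])
        hence "a / u - p (\<lambda>w. (1/u) * h w - h0 w) \<le> c" by simp
        moreover have "p f = u * p (\<lambda>w. (1/u) * h w - h0 w)"
        proof -
          have "f = (\<lambda>w. u * ((1/u) * h w - h0 w))" using e u u_def by (auto simp: algebra_simps)
          moreover have "(\<lambda>w. (1/u) * h w - h0 w) \<in> X" using Xlin[OF hX h0X, of "1/u" "-1"] by simp
          ultimately show ?thesis using phom u by simp
        qed
        ultimately have "a - u * c \<le> p f" using u
          by (simp add: field_simps)
        thus ?thesis using e u_def by simp
      qed
    qed
    hence "M' = M" using Mmax MM' by blast
    moreover have "((\<lambda>w. (\<lambda>w. 0) w + 1 * h0 w), 0 + 1 * c) \<in> M'" by (rule M'I[OF zM])
    ultimately have "(h0, c) \<in> M" by simp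
    thus False using nh by blast
  qed
  define \<Lambda> where "\<Lambda> h = (THE a. (h,a) \<in> M)" for h
  have \<Lambda>eq: "\<Lambda> h = a" if "(h,a)\<in>M" for h a
    unfolding \<Lambda>_def using that func by blast
  have \<Lambda>M: "(h, \<Lambda> h) \<in> M" if "h\<in>X" for h
    using full[OF that] \<Lambda>eq by blast
  show ?thesis
  proof (intro exI conjI ballI allI impI)
    fix h assume "h \<in> X" thus "\<Lambda> h \<le> p h" using \<Lambda>M MX by blast
  next
    fix h k s t assume "h \<in> X" "k \<in> X"
    hence "((\<lambda>w. s * h w + t * k w), s * \<Lambda> h + t * \<Lambda> k) \<in> M"
      by (intro lincl_D[OF Mlin \<Lambda>M \<Lambda>M]) auto
    thus "\<Lambda> (\<lambda>w. s * h w + t * k w) = s * \<Lambda> h + t * \<Lambda> k" by (rule \<Lambda>eq)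
  next
    fix h a assume "(h,a)\<in>G0" thus "\<Lambda> h = a" using \<Lambda>eq G0M by blast
  qed
qed


definition bfun :: "('w \<Rightarrow> real) set" where "bfun = {h. \<exists>B. \<forall>w. \<bar>h w\<bar> \<le> B}"
definition psup :: "('w \<Rightarrow> real) \<Rightarrow> real" where "psup h = Sup (range h)"
definition Phi :: "('a::metric_space \<Rightarrow> real) \<Rightarrow> ('a \<times> 'a \<Rightarrow> real)" where
  "Phi f = (\<lambda>(p,q). (f p - f q) / dist p q)"
definition ind :: "'w set \<Rightarrow> 'w \<Rightarrow> real" where "ind S w = (if w \<in> S then 1 else 0)"

lemma bfunI: "(\<And>w. \<bar>h w\<bar> \<le> B) \<Longrightarrow> h \<in> bfun" unfolding bfun_def by blast

lemma bfun_lin: "h \<in> bfun \<Longrightarrow> k \<in> bfun \<Longrightarrow> (\<lambda>w. s * h w + t * k w) \<in> bfun"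
proof -
  assume "h \<in> bfun" "k \<in> bfun"
  then obtain B1 B2 where B: "\<forall>w. \<bar>h w\<bar> \<le> B1" "\<forall>w. \<bar>k w\<bar> \<le> B2" unfolding bfun_def by blast
  show ?thesis
  proof (rule bfunI)
    fix w
    have "\<bar>s * h w + t * k w\<bar> \<le> \<bar>s\<bar> * \<bar>h w\<bar> + \<bar>t\<bar> * \<bar>k w\<bar>" by (rule comb_bound)
    also have "\<dots> \<le> \<bar>s\<bar> * B1 + \<bar>t\<bar> * B2" using B by (intro add_mono mult_left_mono) auto
    finally show "\<bar>s * h w + t * k w\<bar> \<le> \<bar>s\<bar> * B1 + \<bar>t\<bar> * B2" .
  qed
qed

lemma bfun_bdd: "h \<in> bfun \<Longrightarrow> bdd_above (range h)"
  unfolding bfun_def by (auto intro: bdd_aboveI2[where M=B for B] simp: abs_le_iff)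

lemma psup_ge: "h \<in> bfun \<Longrightarrow> h w \<le> psup h"
  unfolding psup_def by (rule cSup_upper[OF _ bfun_bdd]) auto

lemma psup_le: "(\<And>w. h w \<le> C) \<Longrightarrow> psup h \<le> C"
  unfolding psup_def by (rule cSup_least) auto

lemma psup_sub: "h \<in> bfun \<Longrightarrow> k \<in> bfun \<Longrightarrow> psup (\<lambda>w. h w + k w) \<le> psup h + psup k"
  by (rule psup_le) (intro add_mono psup_ge)

lemma psup_hom: assumes "h \<in> bfun" "0 \<le> t" shows "psup (\<lambda>w. t * h w) = t * psup h"
proof (cases "t = 0")
  case True thus ?thesis by (simp add: psup_def)
next
  case False
  hence t: "t > 0" using assms by simp
  have ht: "(\<lambda>w. t * h w) \<in> bfun" using bfun_lin[OF assms(1) assms(1), of t 0] by simp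
  have 1: "psup (\<lambda>w. t * h w) \<le> t * psup h"
    by (rule psup_le) (use psup_ge[OF assms(1)] t in simp)
  have "psup h \<le> psup (\<lambda>w. t * h w) / t"
    by (rule psup_le) (use psup_ge[OF ht] t in \<open>simp add: pos_le_divide_eq mult.commute\<close>)
  hence 2: "t * psup h \<le> psup (\<lambda>w. t * h w)" using t by (simp add: pos_le_divide_eq mult.commute)
  show ?thesis using 1 2 by simp
qed

lemma Phi_bound: "f \<in> lip0 z \<Longrightarrow> \<bar>Phi f w\<bar> \<le> lipnorm f"
proof (cases w)
  case (Pair p q)
  assume f: "f \<in> lip0 z"
  show ?thesis
  proof (cases "p = q")
    case True thus ?thesis using Pair lipnorm_nonneg[OF f] by (simp add: Phi_def)
  next
    case False
    hence "\<bar>f p - f q\<bar> / dist p q \<le> lipnorm f" by (rule lipnorm_ge[OF f])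
    thus ?thesis using Pair by (simp add: Phi_def)
  qed
qed

lemma Phi_bfun: "f \<in> lip0 z \<Longrightarrow> Phi f \<in> bfun"
  by (rule bfunI[OF Phi_bound])

lemma Phi_lin: "Phi (\<lambda>x. a * f x + b * g x) = (\<lambda>w. a * Phi f w + b * Phi g w)"
  by (auto simp: Phi_def fun_eq_iff diff_divide_distrib add_divide_distrib algebra_simps)

lemma Phi_zero: "Phi (\<lambda>x. 0) = (\<lambda>w. 0)"
  by (auto simp: Phi_def fun_eq_iff)

lemma lipnorm_le_psup: assumes "f \<in> lip0 z" shows "lipnorm f \<le> psup (Phi f)"
  unfolding lipnorm_def
proof (rule cSup_least)
  fix t assume "t \<in> {0} \<union> {\<bar>f x - f y\<bar> / dist x y | x y. x \<noteq> y}"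
  then show "t \<le> psup (Phi f)"
  proof
    assume "t \<in> {0}"
    thus ?thesis using psup_ge[OF Phi_bfun[OF assms], of "(z,z)"] by (simp add: Phi_def)
  next
    assume "t \<in> {\<bar>f x - f y\<bar> / dist x y | x y. x \<noteq> y}"
    then obtain x y where t: "t = \<bar>f x - f y\<bar> / dist x y" by blast
    show ?thesis
    proof (cases "f y \<le> f x")
      case True
      thus ?thesis using psup_ge[OF Phi_bfun[OF assms], of "(x,y)"] t by (simp add: Phi_def)
    next
      case False
      thus ?thesis using psup_ge[OF Phi_bfun[OF assms], of "(y,x)"] t
        by (simp add: Phi_def dist_commute)
    qed
  qed
qed simp

definition isext :: "'a::metric_space \<Rightarrow> (('a \<Rightarrow> real) \<Rightarrow> real) \<Rightarrow> (('a \<times> 'a \<Rightarrow> real) \<Rightarrow> real) \<Rightarrow> bool" where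
  "isext z \<mu> \<Lambda> \<longleftrightarrow> (\<forall>h\<in>bfun. \<Lambda> h \<le> psup h) \<and>
     (\<forall>h\<in>bfun. \<forall>k\<in>bfun. \<forall>s t. \<Lambda> (\<lambda>w. s * h w + t * k w) = s * \<Lambda> h + t * \<Lambda> k) \<and>
     (\<forall>f\<in>lip0 z. \<Lambda> (Phi f) = \<mu> f)"

lemma mu_le_psup:
  assumes "\<mu> \<in> lipdual z" "dualnorm z \<mu> \<le> 1" "f \<in> lip0 z"
  shows "\<mu> f \<le> psup (Phi f)"
proof -
  have "\<mu> f \<le> \<bar>\<mu> f\<bar>" by simp
  also have "\<dots> \<le> dualnorm z \<mu> * lipnorm f" by (rule lipdual_bound[OF assms(1,3)])
  also have "\<dots> \<le> 1 * lipnorm f" by (intro mult_right_mono assms lipnorm_nonneg[OF assms(3)])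
  also have "\<dots> \<le> psup (Phi f)" using lipnorm_le_psup[OF assms(3)] by simp
  finally show ?thesis .
qed

lemma isext_exists:
  assumes "\<mu> \<in> lipdual z" "dualnorm z \<mu> \<le> 1"
  shows "\<exists>\<Lambda>. isext z \<mu> \<Lambda>"
proof -
  define G0 where "G0 = {(Phi f, \<mu> f) | f. f \<in> lip0 z}"
  have "\<exists>\<Lambda>. (\<forall>h\<in>bfun. \<Lambda> h \<le> psup h) \<and>
     (\<forall>h\<in>bfun. \<forall>k\<in>bfun. \<forall>s t. \<Lambda> (\<lambda>w. s * h w + t * k w) = s * \<Lambda> h + t * \<Lambda> k) \<and>
     (\<forall>h a. (h,a)\<in>G0 \<longrightarrow> \<Lambda> h = a)"
  proof (rule hahn_banach)
    fix h k :: "'a \<times> 'a \<Rightarrow> real" and s t :: real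
    assume "h \<in> bfun" "k \<in> bfun" thus "(\<lambda>w. s * h w + t * k w) \<in> bfun" by (rule bfun_lin)
  next
    fix h k :: "'a \<times> 'a \<Rightarrow> real"
    assume "h \<in> bfun" "k \<in> bfun" thus "psup (\<lambda>w. h w + k w) \<le> psup h + psup k" by (rule psup_sub)
  next
    fix h :: "'a \<times> 'a \<Rightarrow> real" and t :: real
    assume "h \<in> bfun" "0 \<le> t" thus "psup (\<lambda>w. t * h w) = t * psup h" by (rule psup_hom)
  next
    show "lincl G0" unfolding lincl_def
    proof (intro allI impI)
      fix h a k b s t
      assume "(h, a) \<in> G0" "(k, b) \<in> G0"
      then obtain f g where fg: "h = Phi f" "a = \<mu> f" "f \<in> lip0 z" "k = Phi g" "b = \<mu> g" "g \<in> lip0 z"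
        unfolding G0_def by blast
      have e1: "(\<lambda>w. s * h w + t * k w) = Phi (\<lambda>x. s * f x + t * g x)" using fg(1,4) Phi_lin[of s f t g] by simp
      have e2: "s * a + t * b = \<mu> (\<lambda>x. s * f x + t * g x)"
        using fg(2,5) lipdual_lin[OF assms(1) fg(3) fg(6)] by simp
      show "(\<lambda>w. s * h w + t * k w, s * a + t * b) \<in> G0"
        unfolding e1 e2 G0_def using lip0_comb[OF fg(3) fg(6)] by blast
    qed
  next
    fix h a assume "(h,a) \<in> G0"
    then obtain f where f: "h = Phi f" "a = \<mu> f" "f \<in> lip0 z" unfolding G0_def by blast
    show "h \<in> bfun \<and> a \<le> psup h" using f Phi_bfun mu_le_psup[OF assms] by blast
  next
    show "G0 \<noteq> {}" unfolding G0_def using lip0_const0 by blast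
  qed
  then obtain \<Lambda> where L: "(\<forall>h\<in>bfun. \<Lambda> h \<le> psup h) \<and>
     (\<forall>h\<in>bfun. \<forall>k\<in>bfun. \<forall>s t. \<Lambda> (\<lambda>w. s * h w + t * k w) = s * \<Lambda> h + t * \<Lambda> k) \<and>
     (\<forall>h a. (h,a)\<in>G0 \<longrightarrow> \<Lambda> h = a)" by blast
  have "isext z \<mu> \<Lambda>" unfolding isext_def using L unfolding G0_def by blast
  thus ?thesis by blast
qed

lemma ind_bfun: "ind S \<in> bfun" by (rule bfunI[where B=1]) (simp add: ind_def)
lemma ind_scale_bfun: "(\<lambda>w. c * ind S w) \<in> bfun" by (rule bfunI[where B="\<bar>c\<bar>"]) (simp add: ind_def)
lemma const_bfun: "(\<lambda>w. c) \<in> bfun" by (rule bfunI[where B="\<bar>c\<bar>"]) simp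

context
  fixes z :: "'a::metric_space" and \<mu> and \<Lambda>
  assumes ext: "isext z \<mu> \<Lambda>"
begin

lemma E_le: "h \<in> bfun \<Longrightarrow> \<Lambda> h \<le> psup h" using ext unfolding isext_def by blast
lemma E_lin: "h \<in> bfun \<Longrightarrow> k \<in> bfun \<Longrightarrow> \<Lambda> (\<lambda>w. s * h w + t * k w) = s * \<Lambda> h + t * \<Lambda> k"
  using ext unfolding isext_def by blast
lemma E_Phi: "f \<in> lip0 z \<Longrightarrow> \<Lambda> (Phi f) = \<mu> f" using ext unfolding isext_def by blast

lemma E_scale: "h \<in> bfun \<Longrightarrow> \<Lambda> (\<lambda>w. s * h w) = s * \<Lambda> h"
  using E_lin[of h h s 0] by simp

lemma E_add: "h \<in> bfun \<Longrightarrow> k \<in> bfun \<Longrightarrow> \<Lambda> (\<lambda>w. h w + k w) = \<Lambda> h + \<Lambda> k"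
  using E_lin[of h k 1 1] by simp

lemma E_diff: "h \<in> bfun \<Longrightarrow> k \<in> bfun \<Longrightarrow> \<Lambda> (\<lambda>w. h w - k w) = \<Lambda> h - \<Lambda> k"
  using E_lin[of h k 1 "-1"] by simp

lemma E_mono: assumes "h \<in> bfun" "k \<in> bfun" "\<And>w. h w \<le> k w" shows "\<Lambda> h \<le> \<Lambda> k"
proof -
  have d: "(\<lambda>w. h w - k w) \<in> bfun" using bfun_lin[OF assms(1,2), of 1 "-1"] by simp
  have "\<Lambda> (\<lambda>w. h w - k w) \<le> psup (\<lambda>w. h w - k w)" by (rule E_le[OF d])
  also have "\<dots> \<le> 0" by (rule psup_le) (use assms(3) in simp)
  finally show ?thesis using E_diff[OF assms(1,2)] by simp
qed

lemma E_one: "\<Lambda> (\<lambda>w. 1) = 1"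
proof -
  have a: "\<Lambda> (\<lambda>w. 1) \<le> psup (\<lambda>w::'a\<times>'a. 1::real)" using E_le[OF const_bfun, of 1] by simp
  have b: "psup (\<lambda>w::'a\<times>'a. 1::real) \<le> 1" by (rule psup_le) simp
  have 1: "\<Lambda> (\<lambda>w. 1) \<le> 1" using a b by linarith
  have "\<Lambda> (\<lambda>w. (-1) * 1) \<le> psup (\<lambda>w::'a\<times>'a. (-1) * (1::real))" using E_le[OF const_bfun, of "-1"] by simp
  also have "\<dots> \<le> -1" by (rule psup_le) simp
  finally have "- \<Lambda> (\<lambda>w. 1) \<le> -1" using E_scale[OF const_bfun, of "-1" 1] by simp
  thus ?thesis using 1 by simp
qed

lemma E_ind_nonneg: "0 \<le> \<Lambda> (ind S)"
  using E_mono[OF const_bfun ind_bfun, of 0 S] E_scale[OF const_bfun, of 0 0]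
  by (simp add: ind_def)

lemma E_ind_le1: "\<Lambda> (ind S) \<le> 1"
  using E_mono[OF ind_bfun const_bfun, of S 1] E_one by (simp add: ind_def)

lemma E_ind_compl: "\<Lambda> (ind S) + \<Lambda> (ind (- S)) = 1"
proof -
  have "(\<lambda>w. ind S w + ind (-S) w) = (\<lambda>w. 1)" by (auto simp: ind_def fun_eq_iff)
  thus ?thesis using E_add[OF ind_bfun ind_bfun, of S "-S"] E_one by simp
qed

lemma E_abs_bound:
  assumes "h \<in> bfun" "0 \<le> L" "\<And>w. \<bar>h w\<bar> \<le> L * ind S w"
  shows "\<bar>\<Lambda> h\<bar> \<le> L * \<Lambda> (ind S)"
proof -
  have LS: "(\<lambda>w. L * ind S w) \<in> bfun" by (rule ind_scale_bfun)
  have nLS: "(\<lambda>w. (-L) * ind S w) \<in> bfun" by (rule ind_scale_bfun)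
  have u: "h w \<le> L * ind S w" and l: "(-L) * ind S w \<le> h w" for w
    using assms(3)[of w] by (simp_all add: abs_le_iff)
  have "\<Lambda> h \<le> \<Lambda> (\<lambda>w. L * ind S w)" by (rule E_mono[OF assms(1) LS u])
  moreover have "\<Lambda> (\<lambda>w. (-L) * ind S w) \<le> \<Lambda> h" by (rule E_mono[OF nLS assms(1) l])
  moreover have "\<Lambda> (\<lambda>w. L * ind S w) = L * \<Lambda> (ind S)" by (rule E_scale[OF ind_bfun])
  moreover have "\<Lambda> (\<lambda>w. (-L) * ind S w) = (-L) * \<Lambda> (ind S)" by (rule E_scale[OF ind_bfun])
  ultimately show ?thesis unfolding abs_le_iff by linarith
qed

end


lemma split_extreme:
  assumes ext: "extreme_pt (dual_ball z) \<mu>"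
    and A: "A \<in> lipdual z" and B: "B \<in> lipdual z"
    and hsum: "\<And>f. \<mu> f = A f + B f"
    and al: "0 \<le> \<alpha>" "\<alpha> \<le> 1"
    and bA: "\<And>f. f \<in> lip0 z \<Longrightarrow> \<bar>A f\<bar> \<le> \<alpha> * lipnorm f"
    and bB: "\<And>f. f \<in> lip0 z \<Longrightarrow> \<bar>B f\<bar> \<le> (1 - \<alpha>) * lipnorm f"
  shows "A f = \<alpha> * \<mu> f"
proof (cases "f \<in> lip0 z")
  case False
  thus ?thesis using lipdual_out[OF A False] lipdual_out[OF B False] hsum[of f] by simp
next
  case f: True
  show ?thesis
  proof (cases "\<alpha> = 0")
    case True thus ?thesis using bA[OF f] by simp
  next
    case a0: False
    show ?thesis
    proof (cases "\<alpha> = 1")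
      case True thus ?thesis using bB[OF f] hsum[of f] by simp
    next
      case a1: False
      have a: "0 < \<alpha>" "\<alpha> < 1" using al a0 a1 by auto
      define s where "s = min \<alpha> (1 - \<alpha>)"
      have s: "0 < s" "s \<le> \<alpha>" "s \<le> 1 - \<alpha>" using a unfolding s_def by auto
      define c1 where "c1 = s / \<alpha>"
      define c2 where "c2 = s / (1 - \<alpha>)"
      have c1: "0 < c1" "c1 \<le> 1" "c1 * \<alpha> = s" using s a unfolding c1_def by (auto simp: field_simps)
      have c2: "0 < c2" "c2 \<le> 1" "c2 * (1 - \<alpha>) = s" using s a unfolding c2_def by (auto simp: field_simps)
      define a' where "a' = (\<lambda>f. (1 + c1) * A f + (1 - c2) * B f)"
      define b' where "b' = (\<lambda>f. (1 - c1) * A f + (1 + c2) * B f)"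
      have ball: "(\<lambda>f. (1 + e1) * A f + (1 + e2) * B f) \<in> dual_ball z"
        if e: "0 \<le> 1 + e1" "0 \<le> 1 + e2" "e1 * \<alpha> + e2 * (1 - \<alpha>) = 0" for e1 e2
        unfolding dual_ball_def
      proof (intro CollectI conjI)
        show "(\<lambda>f. (1 + e1) * A f + (1 + e2) * B f) \<in> lipdual z" by (rule lipdual_comb[OF A B])
        show "dualnorm z (\<lambda>f. (1 + e1) * A f + (1 + e2) * B f) \<le> 1"
        proof (rule dualnorm_le)
          fix g assume g: "g \<in> lip0 z"
          have "\<bar>(1 + e1) * A g + (1 + e2) * B g\<bar> \<le> \<bar>1 + e1\<bar> * \<bar>A g\<bar> + \<bar>1 + e2\<bar> * \<bar>B g\<bar>"
            by (rule comb_bound)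
          also have "\<dots> \<le> (1 + e1) * (\<alpha> * lipnorm g) + (1 + e2) * ((1 - \<alpha>) * lipnorm g)"
            using e by (intro add_mono mult_mono bA bB g) auto
          also have "\<dots> = (\<alpha> + (1 - \<alpha>) + (e1 * \<alpha> + e2 * (1 - \<alpha>))) * lipnorm g"
            by (simp add: algebra_simps)
          also have "\<dots> = 1 * lipnorm g" using e by simp
          finally show "\<bar>(1 + e1) * A g + (1 + e2) * B g\<bar> \<le> 1 * lipnorm g" .
        qed simp
      qed
      have a'b: "a' \<in> dual_ball z" unfolding a'_def using ball[of c1 "- c2"] c1 c2 by simp
      have b'b: "b' \<in> dual_ball z" unfolding b'_def using ball[of "- c1" c2] c1 c2
        by (simp add: algebra_simps)
      have "\<mu> = (\<lambda>f. (a' f + b' f) / 2)" unfolding a'_def b'_def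
        by (simp add: fun_eq_iff hsum algebra_simps)
      hence "a' = b'" using ext a'b b'b unfolding extreme_pt_def by blast
      hence "a' f = b' f" by simp
      hence e: "c1 * A f = c2 * B f" unfolding a'_def b'_def by (simp add: algebra_simps)
      have "s * ((1 - \<alpha>) * A f) = (c1 * \<alpha>) * (1 - \<alpha>) * A f" using c1(3) by simp
      also have "\<dots> = \<alpha> * (1 - \<alpha>) * (c1 * A f)" by (simp add: algebra_simps)
      also have "\<dots> = \<alpha> * (1 - \<alpha>) * (c2 * B f)" using e by simp
      also have "\<dots> = (c2 * (1 - \<alpha>)) * \<alpha> * B f" by (simp add: algebra_simps)
      also have "\<dots> = s * (\<alpha> * B f)" using c2(3) by simp
      finally have "s * ((1 - \<alpha>) * A f) = s * (\<alpha> * B f)" .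
      hence "(1 - \<alpha>) * A f = \<alpha> * B f" using s by simp
      thus ?thesis using hsum[of f] by (simp add: algebra_simps)
    qed
  qed
qed

definition Apart :: "'a::metric_space \<Rightarrow> (('a \<times> 'a \<Rightarrow> real) \<Rightarrow> real) \<Rightarrow> ('a \<times> 'a) set \<Rightarrow> ('a \<Rightarrow> real) \<Rightarrow> real" where
  "Apart z \<Lambda> S = (\<lambda>f. if f \<in> lip0 z then \<Lambda> (\<lambda>w. Phi f w * ind S w) else 0)"

lemma Phi_ind_bfun: "f \<in> lip0 z \<Longrightarrow> (\<lambda>w. Phi f w * ind S w) \<in> bfun"
  by (rule bfunI[where B="lipnorm f"]) (use Phi_bound in \<open>auto simp: ind_def lipnorm_nonneg\<close>)

definition Spt :: "'a \<Rightarrow> ('a \<times> 'a) set" where "Spt r = {(p,q). p = r \<or> q = r}"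

definition er :: "'a \<Rightarrow> 'a \<Rightarrow> 'a \<Rightarrow> real" where
  "er z r = (\<lambda>p. if r = z then (if p = z then 0 else 1) else (if p = r then 1 else 0))"

definition mol :: "'a::metric_space \<Rightarrow> 'a \<Rightarrow> 'a \<Rightarrow> ('a \<Rightarrow> real) \<Rightarrow> real" where
  "mol z x y = (\<lambda>f. if f \<in> lip0 z then (f x - f y) / dist x y else 0)"

lemma mol_bound: "f \<in> lip0 z \<Longrightarrow> \<bar>mol z x y f\<bar> \<le> lipnorm f"
  using Phi_bound[of f z "(x,y)"] by (simp add: mol_def Phi_def)

lemma mol_lipdual: "mol z x y \<in> lipdual z"
proof (rule lipdualI[where C=1])
  fix f g :: "'a \<Rightarrow> real" and a b :: real assume "f \<in> lip0 z" "g \<in> lip0 z"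
  thus "mol z x y (\<lambda>x. a * f x + b * g x) = a * mol z x y f + b * mol z x y g"
    using lip0_comb[of f z g a b] by (simp add: mol_def diff_divide_distrib add_divide_distrib algebra_simps)
next
  fix f :: "'a \<Rightarrow> real" assume "f \<in> lip0 z"
  thus "\<bar>mol z x y f\<bar> \<le> 1 * lipnorm f" using mol_bound by simp
next
  fix f :: "'a \<Rightarrow> real" assume "f \<notin> lip0 z"
  thus "mol z x y f = 0" by (simp add: mol_def)
qed

lemma mol_ball: "mol z x y \<in> dual_ball z"
proof -
  have "dualnorm z (mol z x y) \<le> 1"
    by (rule dualnorm_le) (use mol_bound in auto)
  thus ?thesis unfolding dual_ball_def using mol_lipdual by blast
qed

lemma distfun_lip0: "(\<lambda>p. dist p s - dist z s) \<in> lip0 z"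
proof (rule lip0_I[where L=1])
  fix x y :: 'a
  show "\<bar>(dist x s - dist z s) - (dist y s - dist z s)\<bar> \<le> 1 * dist x y"
    using dist_triangle[of x s y] dist_triangle[of y s x] dist_commute[of x y] by (simp add: abs_le_iff)
qed simp

lemma mol_test: "x \<noteq> y \<Longrightarrow> mol z x y (\<lambda>p. dist p y - dist z y) = 1"
  using distfun_lip0[of y z] by (simp add: mol_def)

lemma er_lip0:
  assumes "uniformly_discrete TYPE('a::metric_space)"
  shows "er z (r::'a) \<in> lip0 z"
proof -
  obtain \<theta> where th: "\<theta> > 0" "\<And>u v::'a. u \<noteq> v \<Longrightarrow> \<theta> \<le> dist u v"
    using assms unfolding uniformly_discrete_def by blast
  show ?thesis
  proof (rule lip0_I[where L="1/\<theta>"])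
    show "er z r z = 0" by (simp add: er_def)
  next
    fix x y :: 'a
    show "\<bar>er z r x - er z r y\<bar> \<le> 1 / \<theta> * dist x y"
    proof (cases "x = y")
      case True thus ?thesis by simp
    next
      case False
      have "\<bar>er z r x - er z r y\<bar> \<le> 1" by (simp add: er_def)
      also have "1 \<le> 1 / \<theta> * dist x y" using th(2)[OF False] th(1) by (simp add: field_simps)
      finally show ?thesis .
    qed
  qed
qed

lemma Phi_er_zero: "w \<notin> Spt r \<Longrightarrow> Phi (er z r) w = 0"
  by (cases w) (auto simp: Phi_def er_def Spt_def)

context
  fixes z :: "'a::metric_space" and \<mu> and \<Lambda>
  assumes ext: "isext z \<mu> \<Lambda>" and mud: "\<mu> \<in> lipdual z"
begin

lemma Apart_lipdual: "Apart z \<Lambda> S \<in> lipdual z"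
proof (rule lipdualI[where C="\<Lambda> (ind S)"])
  fix f g :: "'a \<Rightarrow> real" and a b :: real assume fg: "f \<in> lip0 z" "g \<in> lip0 z"
  have e: "(\<lambda>w. Phi (\<lambda>x. a * f x + b * g x) w * ind S w) =
           (\<lambda>w. a * (Phi f w * ind S w) + b * (Phi g w * ind S w))"
    by (simp add: Phi_lin algebra_simps)
  show "Apart z \<Lambda> S (\<lambda>x. a * f x + b * g x) = a * Apart z \<Lambda> S f + b * Apart z \<Lambda> S g"
    unfolding Apart_def using fg lip0_comb[OF fg] E_lin[OF ext Phi_ind_bfun[OF fg(1)] Phi_ind_bfun[OF fg(2)]] e
    by simp
next
  fix f :: "'a \<Rightarrow> real" assume f: "f \<in> lip0 z"
  have "\<bar>\<Lambda> (\<lambda>w. Phi f w * ind S w)\<bar> \<le> lipnorm f * \<Lambda> (ind S)"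
    by (rule E_abs_bound[OF ext Phi_ind_bfun[OF f] lipnorm_nonneg[OF f]])
       (use Phi_bound[OF f] in \<open>auto simp: ind_def\<close>)
  thus "\<bar>Apart z \<Lambda> S f\<bar> \<le> \<Lambda> (ind S) * lipnorm f" using f by (simp add: Apart_def mult.commute)
qed (simp add: Apart_def)

lemma Apart_bound: "f \<in> lip0 z \<Longrightarrow> \<bar>Apart z \<Lambda> S f\<bar> \<le> \<Lambda> (ind S) * lipnorm f"
proof -
  assume f: "f \<in> lip0 z"
  have "\<bar>\<Lambda> (\<lambda>w. Phi f w * ind S w)\<bar> \<le> lipnorm f * \<Lambda> (ind S)"
    by (rule E_abs_bound[OF ext Phi_ind_bfun[OF f] lipnorm_nonneg[OF f]])
       (use Phi_bound[OF f] in \<open>auto simp: ind_def\<close>)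
  thus "\<bar>Apart z \<Lambda> S f\<bar> \<le> \<Lambda> (ind S) * lipnorm f" using f by (simp add: Apart_def mult.commute)
qed

lemma Apart_sum: "\<mu> f = Apart z \<Lambda> S f + Apart z \<Lambda> (- S) f"
proof (cases "f \<in> lip0 z")
  case False thus ?thesis using lipdual_out[OF mud False] by (simp add: Apart_def)
next
  case True
  have e: "Phi f = (\<lambda>w. (Phi f w * ind S w) + (Phi f w * ind (-S) w))"
    by (auto simp: ind_def fun_eq_iff)
  have "\<mu> f = \<Lambda> (Phi f)" using E_Phi[OF ext True] by simp
  also have "\<dots> = \<Lambda> (\<lambda>w. Phi f w * ind S w) + \<Lambda> (\<lambda>w. Phi f w * ind (-S) w)"
    by (subst e) (rule E_add[OF ext Phi_ind_bfun[OF True] Phi_ind_bfun[OF True]])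
  finally show ?thesis using True by (simp add: Apart_def)
qed

lemma Apart_conc:
  assumes ex: "extreme_pt (dual_ball z) \<mu>"
  shows "Apart z \<Lambda> S f = \<Lambda> (ind S) * \<mu> f"
proof (rule split_extreme[OF ex Apart_lipdual Apart_lipdual Apart_sum])
  show "0 \<le> \<Lambda> (ind S)" by (rule E_ind_nonneg[OF ext])
  show "\<Lambda> (ind S) \<le> 1" by (rule E_ind_le1[OF ext])
  show "\<And>f. f \<in> lip0 z \<Longrightarrow> \<bar>Apart z \<Lambda> S f\<bar> \<le> \<Lambda> (ind S) * lipnorm f" by (rule Apart_bound)
  show "\<And>f. f \<in> lip0 z \<Longrightarrow> \<bar>Apart z \<Lambda> (- S) f\<bar> \<le> (1 - \<Lambda> (ind S)) * lipnorm f"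
    using Apart_bound E_ind_compl[OF ext, of S] by (metis add_diff_cancel_left')
qed

lemma conc_point:
  assumes ex: "extreme_pt (dual_ball z) \<mu>" and ud: "uniformly_discrete TYPE('a)"
    and nz: "\<mu> (er z r) \<noteq> 0"
  shows "\<Lambda> (ind (- Spt r)) = 0"
proof -
  have "Apart z \<Lambda> (- Spt r) (er z r) = \<Lambda> (\<lambda>w. 0)"
  proof -
    have "(\<lambda>w. Phi (er z r) w * ind (- Spt r) w) = (\<lambda>w. 0)"
      by (auto simp: fun_eq_iff ind_def Phi_er_zero)
    thus ?thesis using er_lip0[OF ud] by (simp add: Apart_def)
  qed
  also have "\<Lambda> (\<lambda>w. 0) = 0" using E_scale[OF ext const_bfun, of 0 0] by simp
  finally show ?thesis using Apart_conc[OF ex, of "- Spt r" "er z r"] nz by simp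
qed

end


lemma lipdual_scale_fun: "A \<in> lipdual z \<Longrightarrow> (\<lambda>f. a * A f) \<in> lipdual z"
  using lipdual_comb[of A z A a 0] by simp

lemma lipdual_diff_fun: "A \<in> lipdual z \<Longrightarrow> B \<in> lipdual z \<Longrightarrow> (\<lambda>f. A f - B f) \<in> lipdual z"
  using lipdual_comb[of A z B 1 "-1"] by simp

context
  fixes z :: "'a::metric_space" and \<mu> and \<Lambda>
  assumes ext: "isext z \<mu> \<Lambda>" and mud: "\<mu> \<in> lipdual z"
begin

lemma two_points:
  assumes ex: "extreme_pt (dual_ball z) \<mu>" and ud: "uniformly_discrete TYPE('a)"
    and rs: "r \<noteq> s" and nr: "\<mu> (er z r) \<noteq> 0" and ns: "\<mu> (er z s) \<noteq> 0"
  shows "\<mu> = mol z r s \<or> \<mu> = mol z s r"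
proof -
  define T where "T = Spt r \<inter> Spt s"
  have h1: "\<Lambda> (ind (- Spt r)) = 0" by (rule conc_point[OF ext mud ex ud nr])
  have h2: "\<Lambda> (ind (- Spt s)) = 0" by (rule conc_point[OF ext mud ex ud ns])
  have sb: "(\<lambda>w. ind (- Spt r) w + ind (- Spt s) w) \<in> bfun"
    using bfun_lin[OF ind_bfun ind_bfun, of 1 "- Spt r" 1 "- Spt s"] by simp
  have "\<Lambda> (ind (- T)) \<le> \<Lambda> (\<lambda>w. ind (- Spt r) w + ind (- Spt s) w)"
    by (rule E_mono[OF ext ind_bfun sb]) (auto simp: ind_def T_def)
  also have "\<dots> = 0" using E_add[OF ext ind_bfun ind_bfun, of "- Spt r" "- Spt s"] h1 h2 by simp
  finally have hT: "\<Lambda> (ind (- T)) = 0" using E_ind_nonneg[OF ext, of "- T"] by simp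
  define c0 where "c0 = \<Lambda> (ind {(r,s)}) - \<Lambda> (ind {(s,r)})"
  have c0b: "-1 \<le> c0" "c0 \<le> 1" unfolding c0_def
    using E_ind_nonneg[OF ext, of "{(r,s)}"] E_ind_nonneg[OF ext, of "{(s,r)}"]
      E_ind_le1[OF ext, of "{(r,s)}"] E_ind_le1[OF ext, of "{(s,r)}"] by auto
  have mu_eq: "\<mu> f = c0 * mol z r s f" for f
  proof (cases "f \<in> lip0 z")
    case False thus ?thesis using lipdual_out[OF mud False] by (simp add: mol_def)
  next
    case True
    have "\<mu> f = Apart z \<Lambda> T f + Apart z \<Lambda> (- T) f" by (rule Apart_sum[OF ext mud])
    also have "Apart z \<Lambda> (- T) f = 0" using Apart_conc[OF ext mud ex, of "- T" f] hT by simp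
    also have "Apart z \<Lambda> T f = \<Lambda> (\<lambda>w. Phi f w * ind T w)" using True by (simp add: Apart_def)
    also have "(\<lambda>w. Phi f w * ind T w) =
        (\<lambda>w. Phi f (r,s) * ind {(r,s)} w + (- Phi f (r,s)) * ind {(s,r)} w)"
    proof (rule HOL.ext)
      fix w :: "'a \<times> 'a"
      show "Phi f w * ind T w = Phi f (r,s) * ind {(r,s)} w + (- Phi f (r,s)) * ind {(s,r)} w"
        using rs by (cases w) (auto simp: T_def Spt_def ind_def Phi_def dist_commute field_simps)
    qed
    also have "\<Lambda> \<dots> = Phi f (r,s) * \<Lambda> (ind {(r,s)}) + (- Phi f (r,s)) * \<Lambda> (ind {(s,r)})"
      by (rule E_lin[OF ext ind_bfun ind_bfun])
    finally show ?thesis using True by (simp add: mol_def Phi_def c0_def algebra_simps)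
  qed
  define al where "al = (1 + c0) / 2"
  have molsr: "mol z s r f = - mol z r s f" for f
    by (simp add: mol_def dist_commute minus_divide_left)
  have "(\<lambda>f. al * mol z r s f) f = al * \<mu> f" for f
  proof (rule split_extreme[OF ex, where B="\<lambda>f. ((1 - c0)/2) * mol z s r f"])
    show "(\<lambda>f. al * mol z r s f) \<in> lipdual z" by (rule lipdual_scale_fun[OF mol_lipdual])
    show "(\<lambda>f. ((1 - c0)/2) * mol z s r f) \<in> lipdual z" by (rule lipdual_scale_fun[OF mol_lipdual])
    show "\<And>f. \<mu> f = al * mol z r s f + (1 - c0) / 2 * mol z s r f"
      using mu_eq molsr unfolding al_def by (simp add: field_simps)
    show "0 \<le> al" "al \<le> 1" using c0b unfolding al_def by auto
    show "\<bar>al * mol z r s f\<bar> \<le> al * lipnorm f" if f: "f \<in> lip0 z" for f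
    proof -
      have "0 \<le> al" using c0b unfolding al_def by auto
      thus ?thesis using mult_left_mono[OF mol_bound[OF f, of r s], of al] by (simp add: abs_mult)
    qed
    show "\<bar>(1 - c0) / 2 * mol z s r f\<bar> \<le> (1 - al) * lipnorm f" if f: "f \<in> lip0 z" for f
    proof -
      have e: "(1 - c0) / 2 = 1 - al" unfolding al_def by (simp add: field_simps)
      have "0 \<le> 1 - al" using c0b unfolding al_def by auto
      hence "\<bar>(1 - al) * mol z s r f\<bar> \<le> (1 - al) * lipnorm f"
        using mult_left_mono[OF mol_bound[OF f, of s r], of "1 - al"] by (simp add: abs_mult)
      thus ?thesis unfolding e .
    qed
  qed
  from this[of "\<lambda>p. dist p s - dist z s"] have "al = al * c0"
    using mu_eq[of "\<lambda>p. dist p s - dist z s"] mol_test[OF rs, of z] by simp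
  hence "(1 + c0) * (1 - c0) = 0" unfolding al_def by (simp add: algebra_simps)
  hence "c0 = -1 \<or> c0 = 1" by auto
  thus ?thesis
  proof
    assume "c0 = 1" thus ?thesis using mu_eq by auto
  next
    assume "c0 = -1" thus ?thesis using mu_eq molsr by (auto simp: fun_eq_iff)
  qed
qed

end


lemma delta_lipdual: "delta z x \<in> lipdual z"
proof (rule lipdualI[where C="dist x z"])
  fix f g :: "'a \<Rightarrow> real" and a b :: real assume "f \<in> lip0 z" "g \<in> lip0 z"
  thus "delta z x (\<lambda>x. a * f x + b * g x) = a * delta z x f + b * delta z x g"
    using lip0_comb[of f z g a b] by (simp add: delta_def)
next
  fix f :: "'a \<Rightarrow> real" assume f: "f \<in> lip0 z"
  have "\<bar>f x - f z\<bar> \<le> lipnorm f * dist x z" by (rule lipnorm_le[OF f])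
  thus "\<bar>delta z x f\<bar> \<le> dist x z * lipnorm f" using f lip0_zero[OF f] by (simp add: delta_def mult.commute)
qed (simp add: delta_def)

lemma lipdual_zero_fun: "(\<lambda>f. 0) \<in> lipdual z"
  using lipdual_scale_fun[OF delta_lipdual[of z z], of 0] by simp

lemma lipdual_sum_fun:
  fixes n :: nat
  shows "(\<And>i. i < n \<Longrightarrow> \<phi> i \<in> lipdual z) \<Longrightarrow> (\<lambda>f. \<Sum>i<n. c i * \<phi> i f) \<in> lipdual z"
proof (induction n)
  case 0 thus ?case using lipdual_zero_fun by simp
next
  case (Suc n)
  have "(\<lambda>f. 1 * (\<Sum>i<n. c i * \<phi> i f) + c n * \<phi> n f) \<in> lipdual z"
    by (rule lipdual_comb) (use Suc in auto)
  thus ?case by simp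
qed

lemma delta_span_lipdual: "\<nu> \<in> delta_span z \<Longrightarrow> \<nu> \<in> lipdual z"
  unfolding delta_span_def using lipdual_sum_fun[OF delta_lipdual] by blast

lemma lip0_sumfun: "finite P \<Longrightarrow> (\<And>q. q\<in>P \<Longrightarrow> g q \<in> lip0 z) \<Longrightarrow> (\<lambda>x. \<Sum>q\<in>P. a q * g q x) \<in> lip0 z"
proof (induction P rule: finite_induct)
  case empty thus ?case using lip0_const0 by simp
next
  case (insert q P)
  have "(\<lambda>x. a q * g q x + 1 * (\<Sum>q\<in>P. a q * g q x)) \<in> lip0 z"
    by (rule lip0_comb) (use insert in auto)
  thus ?case using insert by simp
qed

lemma lipdual_sumfun:
  assumes nu: "\<nu> \<in> lipdual z"
  shows "finite P \<Longrightarrow> (\<And>q. q\<in>P \<Longrightarrow> g q \<in> lip0 z) \<Longrightarrow>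
    \<nu> (\<lambda>x. \<Sum>q\<in>P. a q * g q x) = (\<Sum>q\<in>P. a q * \<nu> (g q))"
proof (induction P rule: finite_induct)
  case empty thus ?case using lipdual_zero[OF nu] by simp
next
  case (insert q P)
  have "\<nu> (\<lambda>x. a q * g q x + 1 * (\<Sum>q\<in>P. a q * g q x)) = a q * \<nu> (g q) + 1 * \<nu> (\<lambda>x. \<Sum>q\<in>P. a q * g q x)"
    by (rule lipdual_lin[OF nu]) (use insert lip0_sumfun[OF insert(1), of g z a] in auto)
  thus ?case using insert by simp
qed

lemma bdd_lip:
  fixes g :: "'a::metric_space \<Rightarrow> real"
  assumes th: "\<theta> > 0" "\<And>u v::'a::metric_space. u \<noteq> v \<Longrightarrow> \<theta> \<le> dist u v"
    and K: "\<And>x. \<bar>g x\<bar> \<le> K" and g0: "g z = 0"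
  shows "g \<in> lip0 z" "lipnorm g \<le> 2 * K / \<theta>"
proof -
  have K0: "0 \<le> K" using K[of z] by simp
  have L: "\<bar>g x - g y\<bar> \<le> 2 * K / \<theta> * dist x y" for x y
  proof (cases "x = y")
    case True thus ?thesis by simp
  next
    case False
    have "\<bar>g x - g y\<bar> \<le> 2 * K" using K[of x] K[of y] by (simp add: abs_le_iff)
    also have "\<dots> \<le> 2 * K / \<theta> * dist x y"
    proof -
      have "2 * K * 1 \<le> 2 * K * (dist x y / \<theta>)"
        using th(2)[OF False] th(1) K0 by (intro mult_left_mono) (auto simp: field_simps)
      thus ?thesis by (simp add: field_simps)
    qed
    finally show ?thesis .
  qed
  show "g \<in> lip0 z" by (rule lip0_I[OF g0 L])
  show "lipnorm g \<le> 2 * K / \<theta>" by (rule lipnorm_least[OF L]) (use K0 th in simp)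
qed

lemma small_zero:
  fixes x C :: real
  assumes "\<And>\<epsilon>. \<epsilon> > 0 \<Longrightarrow> \<bar>x\<bar> \<le> \<epsilon> * C"
  shows "x = 0"
proof (rule ccontr)
  assume x: "x \<noteq> 0"
  define \<epsilon> where "\<epsilon> = \<bar>x\<bar> / (2 * (\<bar>C\<bar> + 1))"
  have e: "\<epsilon> > 0" using x unfolding \<epsilon>_def by (simp add: add_pos_nonneg)
  have "\<bar>x\<bar> \<le> \<epsilon> * C" by (rule assms[OF e])
  also have "\<dots> \<le> \<epsilon> * \<bar>C\<bar>" using e by (intro mult_left_mono) auto
  also have "\<dots> < \<epsilon> * (2 * (\<bar>C\<bar> + 1))" using e by (intro mult_strict_left_mono) auto
  also have "\<dots> = \<bar>x\<bar>" unfolding \<epsilon>_def by (simp add: add_pos_nonneg)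
  finally show False by simp
qed

lemma sgn_mult_self: "(w::real) * sgn w = \<bar>w\<bar>"
  by (cases "w > 0") (auto simp: sgn_real_def)

lemma determ:
  assumes ud: "uniformly_discrete TYPE('a::metric_space)"
    and nu: "\<nu> \<in> lipdual (z::'a)"
    and approx: "\<And>\<epsilon>. \<epsilon> > 0 \<Longrightarrow> \<exists>\<nu>'\<in>delta_span z. dualnorm z (\<lambda>f. \<nu> f - \<nu>' f) < \<epsilon>"
    and zero: "\<And>q. q \<noteq> z \<Longrightarrow> \<nu> (er z q) = 0"
  shows "\<nu> f = 0"
proof -
  obtain \<theta> where th: "\<theta> > 0" "\<And>u v::'a. u \<noteq> v \<Longrightarrow> \<theta> \<le> dist u v"
    using ud unfolding uniformly_discrete_def by blast
  have bnd: "\<nu> b = 0" if b: "b \<in> lip0 z" "\<And>x. \<bar>b x\<bar> \<le> K" for b K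
  proof (rule small_zero[where C = "lipnorm b + 2 * K / \<theta>"])
    fix \<epsilon> :: real assume \<epsilon>: "\<epsilon> > 0"
    obtain \<nu>' where \<nu>': "\<nu>' \<in> delta_span z" "dualnorm z (\<lambda>f. \<nu> f - \<nu>' f) < \<epsilon>"
      using approx[OF \<epsilon>] by blast
    have "\<exists>(n::nat) (c::nat\<Rightarrow>real) (p::nat\<Rightarrow>'a). \<nu>' = (\<lambda>f. \<Sum>i<n. c i * delta z (p i) f)" using \<nu>'(1) by (simp add: delta_span_def)
    then obtain n :: nat and c :: "nat \<Rightarrow> real" and p :: "nat \<Rightarrow> 'a" where \<nu>'eq: "\<nu>' = (\<lambda>f. \<Sum>i<n. c i * delta z (p i) f)" by auto
    define P where "P = p ` {..<n} - {z}"
    have finP: "finite P" unfolding P_def by simp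
    define w where "w q = (\<Sum>i\<in>{i\<in>{..<n}. p i = q}. c i)" for q
    have rep: "\<nu>' g = (\<Sum>q\<in>P. w q * g q)" if g: "g \<in> lip0 z" for g
    proof -
      have "\<nu>' g = (\<Sum>i<n. c i * g (p i))" using g by (simp add: \<nu>'eq delta_def)
      also have "\<dots> = (\<Sum>q\<in>p ` {..<n}. \<Sum>i\<in>{i\<in>{..<n}. p i = q}. c i * g (p i))"
        by (rule sum.image_gen) simp
      also have "\<dots> = (\<Sum>q\<in>p ` {..<n}. w q * g q)"
        by (rule sum.cong) (auto simp: w_def sum_distrib_right)
      also have "\<dots> = (\<Sum>q\<in>P. w q * g q)"
        unfolding P_def by (rule sum.mono_neutral_right) (use lip0_zero[OF g] in auto)
      finally show ?thesis .
    qed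
    define sg where "sg = (\<lambda>x. \<Sum>q\<in>P. sgn (w q) * er z q x)"
    have sgx: "sg x = (if x \<in> P then sgn (w x) else 0)" for x
    proof -
      have "sg x = (\<Sum>q\<in>P. if x = q then sgn (w q) else 0)"
        unfolding sg_def by (rule sum.cong) (auto simp: er_def P_def)
      also have "\<dots> = (if x \<in> P then sgn (w x) else 0)" using sum.delta'[OF finP, of x "\<lambda>q. sgn (w q)"] by simp
      finally show ?thesis .
    qed
    have sgb: "\<bar>sg x\<bar> \<le> 1" for x by (simp add: sgx sgn_real_def)
    have sgz: "sg z = 0" by (simp add: sgx P_def)
    have sg0: "sg \<in> lip0 z" using bdd_lip(1)[OF th(1) th(2), of sg 1 z] sgb sgz by blast
    have sglip: "lipnorm sg \<le> 2 * 1 / \<theta>" using bdd_lip(2)[OF th(1) th(2), of sg 1 z] sgb sgz by blast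
    have nusg: "\<nu> sg = 0"
    proof -
      have "\<nu> sg = (\<Sum>q\<in>P. sgn (w q) * \<nu> (er z q))"
        unfolding sg_def by (rule lipdual_sumfun[OF nu finP]) (rule er_lip0[OF ud])
      also have "\<dots> = 0" by (rule sum.neutral) (auto simp: P_def zero)
      finally show ?thesis .
    qed
    have nu'sg: "\<nu>' sg = (\<Sum>q\<in>P. \<bar>w q\<bar>)"
      unfolding rep[OF sg0] by (rule sum.cong) (auto simp: sgx sgn_mult_self)
    have dn: "(\<lambda>f. \<nu> f - \<nu>' f) \<in> lipdual z"
      by (rule lipdual_diff_fun[OF nu delta_span_lipdual[OF \<nu>'(1)]])
    have dnb: "\<bar>\<nu> g - \<nu>' g\<bar> \<le> \<epsilon> * lipnorm g" if g: "g \<in> lip0 z" for g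
    proof -
      have "\<bar>\<nu> g - \<nu>' g\<bar> \<le> dualnorm z (\<lambda>f. \<nu> f - \<nu>' f) * lipnorm g"
        using lipdual_bound[OF dn g] by simp
      also have "\<dots> \<le> \<epsilon> * lipnorm g" using \<nu>'(2) lipnorm_nonneg[OF g]
        by (intro mult_right_mono) auto
      finally show ?thesis .
    qed
    have sumw: "(\<Sum>q\<in>P. \<bar>w q\<bar>) \<le> \<epsilon> * (2 / \<theta>)"
    proof -
      have "(\<Sum>q\<in>P. \<bar>w q\<bar>) = - (\<nu> sg - \<nu>' sg)" using nusg nu'sg by simp
      also have "\<dots> \<le> \<epsilon> * lipnorm sg" using dnb[OF sg0] by simp
      also have "\<dots> \<le> \<epsilon> * (2 / \<theta>)" using sglip \<epsilon> by (intro mult_left_mono) auto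
      finally show ?thesis .
    qed
    have K0: "0 \<le> K" using b(2)[of z] by simp
    have "\<bar>\<nu>' b\<bar> \<le> (\<Sum>q\<in>P. \<bar>w q\<bar> * K)"
    proof -
      have "\<bar>\<nu>' b\<bar> = \<bar>\<Sum>q\<in>P. w q * b q\<bar>" using rep[OF b(1)] by simp
      also have "\<dots> \<le> (\<Sum>q\<in>P. \<bar>w q * b q\<bar>)" by (rule sum_abs)
      also have "\<dots> \<le> (\<Sum>q\<in>P. \<bar>w q\<bar> * K)"
        by (rule sum_mono) (use b(2) in \<open>auto simp: abs_mult intro: mult_left_mono\<close>)
      finally show ?thesis .
    qed
    also have "\<dots> = K * (\<Sum>q\<in>P. \<bar>w q\<bar>)" by (simp add: sum_distrib_left mult.commute)
    also have "\<dots> \<le> K * (\<epsilon> * (2 / \<theta>))" using sumw K0 by (intro mult_left_mono)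
    finally have nb: "\<bar>\<nu>' b\<bar> \<le> K * (\<epsilon> * (2 / \<theta>))" .
    have "\<bar>\<nu> b\<bar> \<le> \<bar>\<nu> b - \<nu>' b\<bar> + \<bar>\<nu>' b\<bar>" by simp
    also have "\<dots> \<le> \<epsilon> * lipnorm b + K * (\<epsilon> * (2 / \<theta>))" using dnb[OF b(1)] nb by simp
    also have "\<dots> = \<epsilon> * (lipnorm b + 2 * K / \<theta>)" by (simp add: field_simps)
    finally show "\<bar>\<nu> b\<bar> \<le> \<epsilon> * (lipnorm b + 2 * K / \<theta>)" .
  qed
  show ?thesis
  proof (cases "f \<in> lip0 z")
    case False thus ?thesis by (rule lipdual_out[OF nu])
  next
    case f: True
    show ?thesis
    proof (rule small_zero[where C = "2 * lipnorm f"])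
      fix \<epsilon> :: real assume \<epsilon>: "\<epsilon> > 0"
      obtain \<nu>' where \<nu>': "\<nu>' \<in> delta_span z" "dualnorm z (\<lambda>f. \<nu> f - \<nu>' f) < \<epsilon>"
        using approx[OF \<epsilon>] by blast
      have "\<exists>(n::nat) (c::nat\<Rightarrow>real) (p::nat\<Rightarrow>'a). \<nu>' = (\<lambda>f. \<Sum>i<n. c i * delta z (p i) f)" using \<nu>'(1) by (simp add: delta_span_def)
      then obtain n :: nat and c :: "nat \<Rightarrow> real" and p :: "nat \<Rightarrow> 'a" where \<nu>'eq: "\<nu>' = (\<lambda>f. \<Sum>i<n. c i * delta z (p i) f)" by auto
      define R where "R = (\<Sum>i<n. \<bar>f (p i)\<bar>)"
      have R0: "0 \<le> R" unfolding R_def by (rule sum_nonneg) simp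
      have Ri: "\<bar>f (p i)\<bar> \<le> R" if "i < n" for i
        unfolding R_def by (rule member_le_sum) (use that in auto)
      define fR where "fR = (\<lambda>x. max (- R) (min R (f x)))"
      have fRl: "\<bar>fR x - fR y\<bar> \<le> lipnorm f * dist x y" for x y
      proof -
        have "\<bar>fR x - fR y\<bar> \<le> \<bar>f x - f y\<bar>" unfolding fR_def by (simp add: abs_le_iff max_def min_def) linarith
        also have "\<dots> \<le> lipnorm f * dist x y" by (rule lipnorm_le[OF f])
        finally show ?thesis .
      qed
      have fR0: "fR \<in> lip0 z"
        by (rule lip0_I[OF _ fRl]) (use R0 lip0_zero[OF f] in \<open>simp add: fR_def\<close>)
      have fRn: "lipnorm fR \<le> lipnorm f" by (rule lipnorm_least[OF fRl lipnorm_nonneg[OF f]])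
      have fRb: "\<bar>fR x\<bar> \<le> R" for x using R0 unfolding fR_def by (simp add: abs_le_iff)
      have nfR: "\<nu> fR = 0" by (rule bnd[OF fR0 fRb])
      have eq': "\<nu>' f = \<nu>' fR"
      proof -
        have "(\<Sum>i<n. c i * f (p i)) = (\<Sum>i<n. c i * fR (p i))"
        proof (rule sum.cong)
          fix i assume "i \<in> {..<n}"
          hence "\<bar>f (p i)\<bar> \<le> R" using Ri by simp
          hence "fR (p i) = f (p i)" unfolding fR_def by (simp add: abs_le_iff)
          thus "c i * f (p i) = c i * fR (p i)" by simp
        qed simp
        thus ?thesis using f fR0 by (simp add: \<nu>'eq delta_def)
      qed
      have dn: "(\<lambda>f. \<nu> f - \<nu>' f) \<in> lipdual z"
        by (rule lipdual_diff_fun[OF nu delta_span_lipdual[OF \<nu>'(1)]])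
      have dnb: "\<bar>\<nu> g - \<nu>' g\<bar> \<le> \<epsilon> * lipnorm g" if g: "g \<in> lip0 z" for g
      proof -
        have "\<bar>\<nu> g - \<nu>' g\<bar> \<le> dualnorm z (\<lambda>f. \<nu> f - \<nu>' f) * lipnorm g"
          using lipdual_bound[OF dn g] by simp
        also have "\<dots> \<le> \<epsilon> * lipnorm g" using \<nu>'(2) lipnorm_nonneg[OF g]
          by (intro mult_right_mono) auto
        finally show ?thesis .
      qed
      have "\<bar>\<nu> f\<bar> = \<bar>(\<nu> f - \<nu>' f) - (\<nu> fR - \<nu>' fR)\<bar>" using nfR eq' by simp
      also have "\<dots> \<le> \<bar>\<nu> f - \<nu>' f\<bar> + \<bar>\<nu> fR - \<nu>' fR\<bar>" by (rule abs_triangle_ineq4)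
      also have "\<dots> \<le> \<epsilon> * lipnorm f + \<epsilon> * lipnorm f"
        using dnb[OF f] dnb[OF fR0] mult_left_mono[OF fRn less_imp_le[OF \<epsilon>]] by linarith
      finally show "\<bar>\<nu> f\<bar> \<le> \<epsilon> * (2 * lipnorm f)" by simp
    qed
  qed
qed


lemma pe_facts:
  assumes "preserved_extreme z \<mu>"
  shows "\<mu> \<in> lipdual z" "dualnorm z \<mu> \<le> 1" "extreme_pt (dual_ball z) \<mu>"
    "\<And>\<epsilon>. \<epsilon> > 0 \<Longrightarrow> \<exists>\<nu>\<in>delta_span z. dualnorm z (\<lambda>f. \<mu> f - \<nu> f) < \<epsilon>"
  using assms unfolding preserved_extreme_def free_ball_def free_def dual_ball_def by blast+

lemma mol_swap: "mol z s r f = - mol z r s f"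
  by (simp add: mol_def dist_commute minus_divide_left)

lemma is_molecule:
  fixes z :: "'a::metric_space"
  assumes ud: "uniformly_discrete TYPE('a)" and pe: "preserved_extreme z \<mu>"
    and nt: "x0 \<noteq> z"
  shows "\<exists>x y. x \<noteq> y \<and> \<mu> = mol z x y"
proof -
  note mud = pe_facts(1)[OF pe] and mun = pe_facts(2)[OF pe] and ex = pe_facts(3)[OF pe]
    and appr = pe_facts(4)[OF pe]
  obtain \<Lambda> where ext: "isext z \<mu> \<Lambda>" using isext_exists[OF mud mun] by blast
  have "\<exists>r. r \<noteq> z \<and> \<mu> (er z r) \<noteq> 0"
  proof (rule ccontr)
    assume "\<not> ?thesis"
    hence z0: "\<And>q. q \<noteq> z \<Longrightarrow> \<mu> (er z q) = 0" by blast
    have "\<mu> f = 0" for f by (rule determ[OF ud mud appr z0])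
    hence mu0: "\<mu> = (\<lambda>f. (mol z x0 z f + mol z z x0 f) / 2)" by (simp add: fun_eq_iff mol_swap[of z z x0])
    have "mol z x0 z = mol z z x0" using ex mu0 mol_ball unfolding extreme_pt_def by blast
    hence "mol z x0 z (\<lambda>p. dist p z - dist z z) = mol z z x0 (\<lambda>p. dist p z - dist z z)" by simp
    thus False using mol_test[OF nt, of z] mol_swap[of z z x0] by simp
  qed
  then obtain r where r: "r \<noteq> z" "\<mu> (er z r) \<noteq> 0" by blast
  have "\<exists>s. s \<noteq> r \<and> \<mu> (er z s) \<noteq> 0"
  proof (cases "\<exists>s. s \<noteq> z \<and> s \<noteq> r \<and> \<mu> (er z s) \<noteq> 0")
    case True thus ?thesis by blast
  next
    case False
    define a where "a = \<mu> (er z r)"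
    define \<nu> where "\<nu> = (\<lambda>f. \<mu> f - a * delta z r f)"
    have nud: "\<nu> \<in> lipdual z" unfolding \<nu>_def using lipdual_comb[OF mud delta_lipdual[of z r], of 1 "-a"] by simp
    have "\<nu> f = 0" for f
    proof (rule determ[OF ud nud])
      fix \<epsilon> :: real assume \<epsilon>: "\<epsilon> > 0"
      obtain \<nu>' where \<nu>': "\<nu>' \<in> delta_span z" "dualnorm z (\<lambda>f. \<mu> f - \<nu>' f) < \<epsilon>"
        using appr[OF \<epsilon>] by blast
      have "\<exists>(n::nat) (c::nat\<Rightarrow>real) (p::nat\<Rightarrow>'a). \<nu>' = (\<lambda>f. \<Sum>i<n. c i * delta z (p i) f)"
        using \<nu>'(1) by (simp add: delta_span_def)
      then obtain n :: nat and c :: "nat \<Rightarrow> real" and p :: "nat \<Rightarrow> 'a"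
        where \<nu>'eq: "\<nu>' = (\<lambda>f. \<Sum>i<n. c i * delta z (p i) f)" by auto
      define \<nu>'' where "\<nu>'' = (\<lambda>f. \<nu>' f - a * delta z r f)"
      have "\<nu>'' = (\<lambda>f. \<Sum>i<Suc n. (c(n := - a)) i * delta z ((p(n := r)) i) f)"
      proof (rule HOL.ext)
        fix f
        have "(\<Sum>i<Suc n. (c(n := - a)) i * delta z ((p(n := r)) i) f) =
              (\<Sum>i<n. (c(n := - a)) i * delta z ((p(n := r)) i) f) + (- a) * delta z r f"
          by (simp only: sum.lessThan_Suc) simp
        also have "(\<Sum>i<n. (c(n := - a)) i * delta z ((p(n := r)) i) f) = (\<Sum>i<n. c i * delta z (p i) f)"
          by (rule sum.cong) auto
        finally show "\<nu>'' f = (\<Sum>i<Suc n. (c(n := - a)) i * delta z ((p(n := r)) i) f)"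
          unfolding \<nu>''_def \<nu>'eq by simp
      qed
      hence "\<nu>'' \<in> delta_span z" unfolding delta_span_def by blast
      moreover have "(\<lambda>f. \<nu> f - \<nu>'' f) = (\<lambda>f. \<mu> f - \<nu>' f)" unfolding \<nu>_def \<nu>''_def by simp
      ultimately show "\<exists>\<nu>'\<in>delta_span z. dualnorm z (\<lambda>f. \<nu> f - \<nu>' f) < \<epsilon>" using \<nu>'(2) by (intro bexI[of _ \<nu>'']) auto
    next
      fix q assume q: "q \<noteq> z"
      show "\<nu> (er z q) = 0"
      proof (cases "q = r")
        case True thus ?thesis using er_lip0[OF ud, of z r] r(1) by (simp add: \<nu>_def a_def delta_def er_def)
      next
        case qr: False
        hence "\<mu> (er z q) = 0" using False q by blast
        thus ?thesis using er_lip0[OF ud, of z q] qr q by (simp add: \<nu>_def delta_def er_def)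
      qed
    qed
    hence "\<mu> (er z z) = a * delta z r (er z z)" unfolding \<nu>_def by (metis eq_iff_diff_eq_0)
    also have "\<dots> = a" using er_lip0[OF ud, of z z] r(1) by (simp add: delta_def er_def)
    finally have "\<mu> (er z z) \<noteq> 0" using r(2) a_def by simp
    thus ?thesis using r(1) by (intro exI[of _ z]) simp
  qed
  then obtain s where s: "s \<noteq> r" "\<mu> (er z s) \<noteq> 0" by blast
  have rs: "r \<noteq> s" using s(1) by simp
  have "\<mu> = mol z r s \<or> \<mu> = mol z s r" by (rule two_points[OF ext mud ex ud rs r(2) s(2)])
  thus ?thesis
  proof
    assume h: "\<mu> = mol z r s" show ?thesis by (intro exI conjI, rule rs, rule h)
  next
    assume h: "\<mu> = mol z s r" show ?thesis by (intro exI conjI, rule s(1), rule h)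
  qed
qed


lemma gap:
  fixes z :: "'a::metric_space"
  assumes ud: "uniformly_discrete TYPE('a)" and pe: "preserved_extreme z \<mu>"
    and xy: "x \<noteq> y" and mu: "\<mu> = mol z x y"
  shows "\<exists>\<delta>>0. \<forall>p. p \<noteq> x \<longrightarrow> p \<noteq> y \<longrightarrow> dist x y + \<delta> \<le> dist x p + dist p y"
proof (rule ccontr)
  assume nog: "\<not> ?thesis"
  note mud = pe_facts(1)[OF pe] and ex = pe_facts(3)[OF pe]
  obtain \<theta> where th: "\<theta> > 0" "\<And>u v::'a. u \<noteq> v \<Longrightarrow> \<theta> \<le> dist u v"
    using ud unfolding uniformly_discrete_def by blast
  define D where "D = dist x y"
  have D0: "D > 0" using xy by (simp add: D_def)
  have nog': "\<exists>p. p \<noteq> x \<and> p \<noteq> y \<and> dist x p + dist p y < D + \<delta>" if d: "\<delta> > 0" for \<delta>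
  proof -
    have "\<not> (\<forall>p. p \<noteq> x \<longrightarrow> p \<noteq> y \<longrightarrow> dist x y + \<delta> \<le> dist x p + dist p y)" using nog d by blast
    thus ?thesis by (auto simp: not_le D_def)
  qed
  have "\<forall>n::nat. \<exists>p. p \<noteq> x \<and> p \<noteq> y \<and> dist x p + dist p y < D + 1 / real (Suc n)"
    using nog' by simp
  then obtain pp where pp: "\<And>n. pp n \<noteq> x \<and> pp n \<noteq> y \<and> dist x (pp n) + dist (pp n) y < D + 1 / real (Suc n)"
    by metis
  define L where "L n = dist x (pp n) + dist (pp n) y" for n
  have Lge: "D \<le> L n" for n unfolding L_def D_def by (rule dist_triangle)
  have Llt: "L n < D + 1 / real (Suc n)" for n using pp[of n] unfolding L_def by blast
  have Lle1: "L n \<le> D + 1" for n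
  proof -
    have "1 / real (Suc n) \<le> 1" by simp
    thus ?thesis using Llt[of n] by linarith
  qed
  have Lpos: "L n > 0" for n using Lge[of n] D0 by linarith
  have LD: "L \<longlonglongrightarrow> D"
  proof (rule real_tendsto_sandwich)
    show "\<forall>\<^sub>F n in sequentially. D \<le> L n" using Lge by simp
    show "\<forall>\<^sub>F n in sequentially. L n \<le> D + inverse (real (Suc n))"
      using Llt by (simp add: less_imp_le inverse_eq_divide)
    show "(\<lambda>n. D) \<longlonglongrightarrow> D" by simp
    show "(\<lambda>n. D + inverse (real (Suc n))) \<longlonglongrightarrow> D"
      using tendsto_add[OF tendsto_const LIMSEQ_inverse_real_of_nat, of D] by simp
  qed
  define w where "w = (if x \<noteq> z then x else y)"
  have wz: "w \<noteq> z" using xy unfolding w_def by auto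
  define S where "S = Spt w"
  define \<rho> where "\<rho> n = (dist x (pp n) * ind S (x, pp n) + dist (pp n) y * ind S (pp n, y)) / L n" for n
  have \<rho>c: "\<exists>c. \<rho> n = 1 - c / L n \<and> \<theta> \<le> c \<and> c \<le> L n" for n
  proof (cases "w = x")
    case True
    have i1: "ind S (x, pp n) = 1" and i2: "ind S (pp n, y) = 0"
      using True pp[of n] xy by (auto simp: S_def Spt_def ind_def)
    have "\<rho> n = 1 - dist (pp n) y / L n"
      unfolding \<rho>_def i1 i2 using Lpos[of n] by (simp add: L_def field_simps)
    moreover have "\<theta> \<le> dist (pp n) y" using th(2) pp[of n] by blast
    moreover have "dist (pp n) y \<le> L n" unfolding L_def by simp
    ultimately show ?thesis by blast
  next
    case False
    hence wy: "w = y" unfolding w_def by auto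
    have i1: "ind S (x, pp n) = 0" and i2: "ind S (pp n, y) = 1"
      using wy pp[of n] xy by (auto simp: S_def Spt_def ind_def)
    have "\<rho> n = 1 - dist x (pp n) / L n"
      unfolding \<rho>_def i1 i2 using Lpos[of n] by (simp add: L_def field_simps)
    moreover have "\<theta> \<le> dist x (pp n)" using th(2) pp[of n] by (metis dist_commute)
    moreover have "dist x (pp n) \<le> L n" unfolding L_def by simp
    ultimately show ?thesis by blast
  qed
  have \<rho>b: "\<rho> n \<in> {0 .. 1 - \<theta> / (D + 1)}" for n
  proof -
    obtain c where c: "\<rho> n = 1 - c / L n" "\<theta> \<le> c" "c \<le> L n" using \<rho>c by blast
    have "c / L n \<le> 1" using c Lpos[of n] by simp
    moreover have "\<theta> / (D + 1) \<le> c / L n"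
    proof -
      have "\<theta> / (D + 1) \<le> \<theta> / L n" using th(1) Lpos[of n] Lle1[of n] by (intro divide_left_mono) auto
      also have "\<dots> \<le> c / L n" using c Lpos[of n] by (intro divide_right_mono) auto
      finally show ?thesis .
    qed
    ultimately show ?thesis using c by auto
  qed
  have rb: "\<forall>n. \<rho> n \<in> {0 .. 1 - \<theta> / (D + 1)}" using \<rho>b by blast
  obtain v r where v: "v \<in> {0 .. 1 - \<theta> / (D + 1)}" and r: "strict_mono (r :: nat \<Rightarrow> nat)"
    and \<rho>v: "(\<rho> \<circ> r) \<longlonglongrightarrow> v"
    by (rule seq_compactE[OF compact_imp_seq_compact[OF compact_Icc] rb])
  have ineq_n: "(D / L n) * \<mu> f + t * \<rho> n \<le> psup (\<lambda>w'. Phi f w' + t * ind S w')"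
    if f: "f \<in> lip0 z" for f t n
  proof -
    define h where "h = (\<lambda>w'. Phi f w' + t * ind S w')"
    have hb: "h \<in> bfun" unfolding h_def using bfun_lin[OF Phi_bfun[OF f] ind_bfun, of 1 t S] by simp
    define p where "p = pp n"
    define a where "a = dist x p"
    define b where "b = dist p y"
    have a0: "a > 0" and b0: "b > 0" using pp[of n] unfolding a_def b_def p_def by auto
    have Lab: "L n = a + b" unfolding L_def a_def b_def p_def by simp
    have e1: "a * h (x,p) = (f x - f p) + t * (a * ind S (x,p))"
      unfolding h_def Phi_def using a0 by (simp add: a_def field_simps)
    have e2: "b * h (p,y) = (f p - f y) + t * (b * ind S (p,y))"
      unfolding h_def Phi_def using b0 by (simp add: b_def field_simps)
    have muf: "\<mu> f = (f x - f y) / D" using f by (simp add: mu mol_def D_def)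
    have "(D / L n) * \<mu> f + t * \<rho> n = (a * h (x,p) + b * h (p,y)) / L n"
      unfolding muf e1 e2 \<rho>_def using D0 Lpos[of n]
      by (simp add: a_def b_def p_def field_simps)
    also have "\<dots> \<le> (a * psup h + b * psup h) / L n"
      using psup_ge[OF hb] a0 b0 Lpos[of n]
      by (intro divide_right_mono add_mono mult_left_mono) auto
    also have "\<dots> = psup h" using Lab Lpos[of n] by (simp add: field_simps)
    finally show ?thesis unfolding h_def .
  qed
  have ineq: "\<mu> f + t * v \<le> psup (\<lambda>w'. Phi f w' + t * ind S w')" if f: "f \<in> lip0 z" for f t
  proof -
    have Lr: "(\<lambda>n. L (r n)) \<longlonglongrightarrow> D" using LIMSEQ_subseq_LIMSEQ[OF LD r] by (simp add: o_def)
    have "(\<lambda>n. (D / L (r n)) * \<mu> f + t * \<rho> (r n)) \<longlonglongrightarrow> (D / D) * \<mu> f + t * v"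
      using \<rho>v D0 by (intro tendsto_intros Lr) (auto simp: o_def)
    hence lim: "(\<lambda>n. (D / L (r n)) * \<mu> f + t * \<rho> (r n)) \<longlonglongrightarrow> \<mu> f + t * v" using D0 by simp
    show ?thesis by (rule LIMSEQ_le_const2[OF lim]) (use ineq_n[OF f] in blast)
  qed
  define G1 where "G1 = {((\<lambda>w'. Phi f w' + t * ind S w'), \<mu> f + t * v) | f t. f \<in> lip0 z}"
  have "\<exists>\<Lambda>. (\<forall>h\<in>bfun. \<Lambda> h \<le> psup h) \<and>
     (\<forall>h\<in>bfun. \<forall>k\<in>bfun. \<forall>s t. \<Lambda> (\<lambda>w. s * h w + t * k w) = s * \<Lambda> h + t * \<Lambda> k) \<and>
     (\<forall>h a. (h,a)\<in>G1 \<longrightarrow> \<Lambda> h = a)"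
  proof (rule hahn_banach)
    fix h k :: "'a \<times> 'a \<Rightarrow> real" and s t :: real
    assume "h \<in> bfun" "k \<in> bfun" thus "(\<lambda>w. s * h w + t * k w) \<in> bfun" by (rule bfun_lin)
  next
    fix h k :: "'a \<times> 'a \<Rightarrow> real"
    assume "h \<in> bfun" "k \<in> bfun" thus "psup (\<lambda>w. h w + k w) \<le> psup h + psup k" by (rule psup_sub)
  next
    fix h :: "'a \<times> 'a \<Rightarrow> real" and t :: real
    assume "h \<in> bfun" "0 \<le> t" thus "psup (\<lambda>w. t * h w) = t * psup h" by (rule psup_hom)
  next
    show "lincl G1" unfolding lincl_def
    proof (intro allI impI)
      fix h a k b s t
      assume "(h, a) \<in> G1" "(k, b) \<in> G1"
      then obtain f g t1 t2 where fg: "h = (\<lambda>w'. Phi f w' + t1 * ind S w')" "a = \<mu> f + t1 * v" "f \<in> lip0 z"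
          "k = (\<lambda>w'. Phi g w' + t2 * ind S w')" "b = \<mu> g + t2 * v" "g \<in> lip0 z"
        unfolding G1_def by blast
      have e1: "(\<lambda>w. s * h w + t * k w) =
          (\<lambda>w'. Phi (\<lambda>x. s * f x + t * g x) w' + (s * t1 + t * t2) * ind S w')"
        using fg(1,4) Phi_lin[of s f t g] by (simp add: fun_eq_iff algebra_simps)
      have e2: "s * a + t * b = \<mu> (\<lambda>x. s * f x + t * g x) + (s * t1 + t * t2) * v"
        using fg(2,5) lipdual_lin[OF mud fg(3) fg(6)] by (simp add: algebra_simps)
      show "(\<lambda>w. s * h w + t * k w, s * a + t * b) \<in> G1"
        unfolding e1 e2 G1_def using lip0_comb[OF fg(3) fg(6)] by blast
    qed
  next
    fix h a assume "(h,a) \<in> G1"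
    then obtain f t where f: "h = (\<lambda>w'. Phi f w' + t * ind S w')" "a = \<mu> f + t * v" "f \<in> lip0 z"
      unfolding G1_def by blast
    have "h \<in> bfun" unfolding f(1) using bfun_lin[OF Phi_bfun[OF f(3)] ind_bfun, of 1 t S] by simp
    moreover have "a \<le> psup h" unfolding f(1,2) by (rule ineq[OF f(3)])
    ultimately show "h \<in> bfun \<and> a \<le> psup h" by blast
  next
    show "G1 \<noteq> {}" unfolding G1_def using lip0_const0 by blast
  qed
  then obtain \<Lambda> where L1: "\<forall>h\<in>bfun. \<Lambda> h \<le> psup h"
    and L2: "\<forall>h\<in>bfun. \<forall>k\<in>bfun. \<forall>s t. \<Lambda> (\<lambda>w. s * h w + t * k w) = s * \<Lambda> h + t * \<Lambda> k"
    and L3: "\<And>h a. (h,a)\<in>G1 \<Longrightarrow> \<Lambda> h = a" by blast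
  have "\<Lambda> (Phi f) = \<mu> f" if f: "f \<in> lip0 z" for f
  proof -
    have "((\<lambda>w'. Phi f w' + 0 * ind S w'), \<mu> f + 0 * v) \<in> G1" unfolding G1_def using f by blast
    thus ?thesis using L3 by fastforce
  qed
  hence ext: "isext z \<mu> \<Lambda>" unfolding isext_def using L1 L2 by blast
  have "\<Lambda> (ind S) = v"
  proof -
    have "((\<lambda>w'. Phi (\<lambda>x. 0) w' + 1 * ind S w'), \<mu> (\<lambda>x. 0) + 1 * v) \<in> G1"
      unfolding G1_def using lip0_const0 by blast
    hence "\<Lambda> (\<lambda>w'. Phi (\<lambda>x. 0) w' + 1 * ind S w') = \<mu> (\<lambda>x. 0) + 1 * v" by (rule L3)
    moreover have "(\<lambda>w'. Phi (\<lambda>x. 0) w' + 1 * ind S w') = ind S" by (simp add: Phi_zero fun_eq_iff)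
    ultimately show ?thesis by (simp add: lipdual_zero[OF mud])
  qed
  moreover have "\<mu> (er z w) \<noteq> 0"
  proof -
    have "\<mu> (er z w) = (er z w x - er z w y) / D" using er_lip0[OF ud, of z w] by (simp add: mu mol_def D_def)
    moreover have "er z w x - er z w y \<noteq> 0" using wz xy unfolding w_def by (auto simp: er_def)
    ultimately show ?thesis using D0 by simp
  qed
  hence "\<Lambda> (ind (- Spt w)) = 0" by (rule conc_point[OF ext mud ex ud])
  hence "\<Lambda> (ind S) = 1" using E_ind_compl[OF ext, of S] unfolding S_def by simp
  moreover have "1 - \<theta> / (D + 1) < 1" using th(1) D0 by simp
  ultimately show False using v by simp
qed


lemma exposer:
  fixes z :: "'a::metric_space"
  assumes xy: "x \<noteq> y" and dp: "\<delta> > 0"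
    and gap: "\<And>p. p \<noteq> x \<Longrightarrow> p \<noteq> y \<Longrightarrow> dist x y + \<delta> \<le> dist x p + dist p y"
  defines "k \<equiv> dist x y / (dist x y + \<delta>)"
  shows "\<exists>g. g \<in> lip0 z \<and> g x - g y = dist x y \<and>
     (\<forall>p q. \<bar>g p - g q\<bar> \<le> dist p q) \<and>
     (\<forall>p q. \<not> ((p = x \<and> q = y) \<or> (p = y \<and> q = x)) \<longrightarrow> \<bar>g p - g q\<bar> \<le> k * dist p q)"
proof -
  define D where "D = dist x y"
  have D0: "D > 0" using xy by (simp add: D_def)
  have dpos: "dist x y + \<delta> > 0" using dp by (simp add: add_nonneg_pos)
  have k1: "0 < k" unfolding k_def using xy dpos by simp
  have k2: "k < 1" unfolding k_def using dpos dp by (simp add: pos_divide_less_eq)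
  have k3: "k * (D + \<delta>) = D" unfolding k_def D_def using dpos by simp
  note k = k1 k2 k3
  define g0 where "g0 p = (if p = x then D/2 else if p = y then - D/2
      else min (D/2 + k * dist p x) (- D/2 + k * dist p y))" for p
  have u1: "g0 q \<le> D/2 + k * dist q x" and u2: "g0 q \<le> - D/2 + k * dist q y"
    and l1: "D/2 - k * dist q x \<le> g0 q" and l2: "- D/2 - k * dist q y \<le> g0 q"
    if q: "q \<noteq> x" "q \<noteq> y" for q
  proof -
    have g: "g0 q = min (D/2 + k * dist q x) (- D/2 + k * dist q y)" using q by (simp add: g0_def)
    show "g0 q \<le> D/2 + k * dist q x" "g0 q \<le> - D/2 + k * dist q y" unfolding g by auto
    have "D \<le> k * (dist q x + dist q y)"
    proof -
      have "D = k * (D + \<delta>)" using k by simp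
      also have "\<dots> \<le> k * (dist q x + dist q y)"
        using gap[OF q] k(1) by (intro mult_left_mono) (auto simp: D_def dist_commute)
      finally show ?thesis .
    qed
    moreover have "0 \<le> k * dist q x" "0 \<le> k * dist q y" using k(1) by auto
    ultimately show "D/2 - k * dist q x \<le> g0 q" "- D/2 - k * dist q y \<le> g0 q"
      unfolding g using D0 by (auto simp: algebra_simps)
  qed
  have oneway: "g0 p - g0 q \<le> k * dist p q"
    if pq: "\<not> ((p = x \<and> q = y) \<or> (p = y \<and> q = x))" for p q
  proof (cases "p = q")
    case True thus ?thesis by simp
  next
    case pq': False
    show ?thesis
    proof (cases "p = x")
      case px: True
      hence qn: "q \<noteq> x" "q \<noteq> y" using pq pq' by auto
      show ?thesis using l1[OF qn] px by (simp add: g0_def dist_commute)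
    next
      case px: False
      show ?thesis
      proof (cases "p = y")
        case py: True
        hence qn: "q \<noteq> x" "q \<noteq> y" using pq pq' xy by auto
        show ?thesis using l2[OF qn] py xy by (simp add: g0_def dist_commute)
      next
        case py: False
        show ?thesis
        proof (cases "q = x")
          case True thus ?thesis using u1[OF px py] by (simp add: g0_def)
        next
          case qx: False
          show ?thesis
          proof (cases "q = y")
            case True thus ?thesis using u2[OF px py] xy by (simp add: g0_def)
          next
            case qy: False
            have gp: "g0 p = min (D/2 + k * dist p x) (- D/2 + k * dist p y)" using px py by (simp add: g0_def)
            have gq: "g0 q = min (D/2 + k * dist q x) (- D/2 + k * dist q y)" using qx qy by (simp add: g0_def)
            have t1: "k * dist p x - k * dist q x \<le> k * dist p q"
              using mult_left_mono[OF dist_triangle[of p x q], of k] k(1) by (simp add: algebra_simps)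
            have t2: "k * dist p y - k * dist q y \<le> k * dist p q"
              using mult_left_mono[OF dist_triangle[of p y q], of k] k(1) by (simp add: algebra_simps)
            show ?thesis unfolding gp gq using t1 t2 by (auto simp: min_def)
          qed
        qed
      qed
    qed
  qed
  have kb: "\<bar>g0 p - g0 q\<bar> \<le> k * dist p q" if pq: "\<not> ((p = x \<and> q = y) \<or> (p = y \<and> q = x))" for p q
  proof -
    have "\<not> ((q = x \<and> p = y) \<or> (q = y \<and> p = x))" using pq by auto
    from oneway[OF pq] oneway[OF this] show ?thesis by (simp add: abs_le_iff dist_commute)
  qed
  have xyv: "g0 x - g0 y = D" using xy by (simp add: g0_def)
  have b1: "\<bar>g0 p - g0 q\<bar> \<le> dist p q" for p q
  proof (cases "(p = x \<and> q = y) \<or> (p = y \<and> q = x)")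
    case True thus ?thesis using xyv by (auto simp: D_def dist_commute abs_minus_commute)
  next
    case False
    have "\<bar>g0 p - g0 q\<bar> \<le> k * dist p q" by (rule kb[OF False])
    also have "\<dots> \<le> dist p q" using mult_right_mono[of k 1 "dist p q"] k by simp
    finally show ?thesis .
  qed
  define g where "g p = g0 p - g0 z" for p
  have "g \<in> lip0 z" by (rule lip0_I[where L=1]) (use b1 in \<open>simp_all add: g_def\<close>)
  moreover have "g x - g y = dist x y" using xyv by (simp add: g_def D_def)
  moreover have "\<forall>p q. \<bar>g p - g q\<bar> \<le> dist p q" using b1 by (simp add: g_def)
  moreover have "\<forall>p q. \<not> ((p = x \<and> q = y) \<or> (p = y \<and> q = x)) \<longrightarrow> \<bar>g p - g q\<bar> \<le> k * dist p q"
    using kb by (simp add: g_def)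
  ultimately show ?thesis by blast
qed


lemma exposed:
  fixes z :: "'a::metric_space"
  assumes mub: "\<mu> \<in> free_ball z" and xy: "x \<noteq> y" and mu: "\<mu> = mol z x y"
    and dp: "\<delta> > 0" and gap: "\<And>p. p \<noteq> x \<Longrightarrow> p \<noteq> y \<Longrightarrow> dist x y + \<delta> \<le> dist x p + dist p y"
  shows "strongly_exposed z \<mu>"
proof -
  define k where "k = dist x y / (dist x y + \<delta>)"
  obtain g where g: "g \<in> lip0 z" "g x - g y = dist x y" "\<And>p q. \<bar>g p - g q\<bar> \<le> dist p q"
     "\<And>p q. \<not> ((p = x \<and> q = y) \<or> (p = y \<and> q = x)) \<Longrightarrow> \<bar>g p - g q\<bar> \<le> k * dist p q"
    using exposer[OF xy dp gap, of z] unfolding k_def by blast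
  define D where "D = dist x y"
  have D0: "D > 0" using xy by (simp add: D_def)
  have dpos: "dist x y + \<delta> > 0" using dp by (simp add: add_nonneg_pos)
  have k1: "0 < k" unfolding k_def using xy dpos by simp
  have k2: "k < 1" unfolding k_def using dpos dp by (simp add: pos_divide_less_eq)
  define c where "c = 1 - k"
  have c0: "c > 0" using k2 by (simp add: c_def)
  have mud: "\<mu> \<in> lipdual z" and mun: "dualnorm z \<mu> \<le> 1"
    using mub unfolding free_ball_def dual_ball_def by auto
  have lg1: "lipnorm g \<le> 1" by (rule lipnorm_least) (use g(3) in auto)
  have mug: "\<mu> g = 1" using g(1,2) xy by (simp add: mu mol_def)
  have "1 \<le> lipnorm g" using lipnorm_ge[OF g(1) xy] g(2) xy by simp
  hence lg: "lipnorm g = 1" using lg1 by simp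
  define K where "K = 2 / c + 1"
  have K0: "K > 0" using c0 unfolding K_def by (simp add: add_pos_pos)
  have key: "dualnorm z (\<lambda>f. \<nu> f - \<mu> f) \<le> K * (1 - \<nu> g)" if nub: "\<nu> \<in> dual_ball z" for \<nu>
  proof -
    have nud: "\<nu> \<in> lipdual z" and nun: "dualnorm z \<nu> \<le> 1" using nub unfolding dual_ball_def by auto
    have "\<nu> g \<le> \<bar>\<nu> g\<bar>" by simp
    also have "\<dots> \<le> dualnorm z \<nu> * lipnorm g" by (rule lipdual_bound[OF nud g(1)])
    also have "\<dots> \<le> 1" using nun lg by simp
    finally have nug: "\<nu> g \<le> 1" .
    show ?thesis
    proof (rule dualnorm_le)
      show "0 \<le> K * (1 - \<nu> g)" using K0 nug by simp
    next
      fix f assume f: "f \<in> lip0 z"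
      define Lf where "Lf = lipnorm f"
      have Lf0: "0 \<le> Lf" unfolding Lf_def by (rule lipnorm_nonneg[OF f])
      show "\<bar>\<nu> f - \<mu> f\<bar> \<le> K * (1 - \<nu> g) * lipnorm f"
      proof (cases "Lf = 0")
        case True
        hence "f = (\<lambda>x. 0)" unfolding Lf_def by (rule lipnorm_zero_imp[OF f])
        thus ?thesis using lipdual_zero[OF nud] lipdual_zero[OF mud] True Lf_def by simp
      next
        case False
        hence Lfp: "Lf > 0" using Lf0 by simp
        define t where "t = c / (2 * Lf)"
        have t0: "t > 0" using c0 Lfp by (simp add: t_def)
        define h where "h = (\<lambda>p. 1 * f p + (- \<mu> f) * g p)"
        have h0: "h \<in> lip0 z" unfolding h_def by (rule lip0_comb[OF f g(1)])
        have muf: "\<bar>\<mu> f\<bar> \<le> Lf"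
        proof -
          have "dualnorm z \<mu> * Lf \<le> 1 * Lf" by (rule mult_right_mono[OF mun Lf0])
          thus ?thesis using lipdual_bound[OF mud f] unfolding Lf_def by simp
        qed
        have mufv: "\<mu> f = (f x - f y) / D" using f by (simp add: mu mol_def D_def)
        have hxy: "h x - h y = 0" unfolding h_def using g(2) D0 mufv by (simp add: D_def field_simps)
        have ub: "\<nu> g + s * \<nu> h \<le> 1" if s: "\<bar>s\<bar> \<le> t" for s
        proof -
          define u where "u = (\<lambda>p. 1 * g p + s * h p)"
          have u0: "u \<in> lip0 z" unfolding u_def by (rule lip0_comb[OF g(1) h0])
          have lu: "lipnorm u \<le> 1"
          proof (rule lipnorm_least)
            fix p q :: 'a assume "p \<noteq> q"
            have ud: "u p - u q = (g p - g q) + s * (h p - h q)" unfolding u_def by (simp add: algebra_simps)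
            show "\<bar>u p - u q\<bar> \<le> 1 * dist p q"
            proof (cases "(p = x \<and> q = y) \<or> (p = y \<and> q = x)")
              case True
              hence "h p - h q = 0" using hxy by auto
              thus ?thesis using ud g(3)[of p q] by simp
            next
              case False
              have hd: "h p - h q = (f p - f q) - \<mu> f * (g p - g q)" unfolding h_def by (simp add: algebra_simps)
              have "\<bar>h p - h q\<bar> \<le> \<bar>f p - f q\<bar> + \<bar>\<mu> f\<bar> * \<bar>g p - g q\<bar>" unfolding hd
                by (metis abs_mult abs_triangle_ineq4)
              also have "\<dots> \<le> Lf * dist p q + Lf * dist p q"
                using lipnorm_le[OF f, of p q] mult_mono[OF muf g(3)[of p q]] Lf0 unfolding Lf_def
                by (intro add_mono) auto
              finally have hb: "\<bar>h p - h q\<bar> \<le> 2 * Lf * dist p q" by simp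
              have "\<bar>s * (h p - h q)\<bar> \<le> t * (2 * Lf * dist p q)"
                unfolding abs_mult using s hb by (intro mult_mono) auto
              also have "\<dots> = c * dist p q" unfolding t_def using Lfp by simp
              finally have sb: "\<bar>s * (h p - h q)\<bar> \<le> c * dist p q" .
              have "\<bar>u p - u q\<bar> \<le> \<bar>g p - g q\<bar> + \<bar>s * (h p - h q)\<bar>" unfolding ud by (rule abs_triangle_ineq)
              also have "\<dots> \<le> k * dist p q + c * dist p q" using g(4)[OF False] sb by (rule add_mono)
              also have "\<dots> = 1 * dist p q" by (simp add: c_def algebra_simps)
              finally show ?thesis .
            qed
          qed simp
          have "\<nu> u \<le> \<bar>\<nu> u\<bar>" by simp
          also have "\<dots> \<le> dualnorm z \<nu> * lipnorm u" by (rule lipdual_bound[OF nud u0])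
          also have "\<dots> \<le> 1" using nun lu dualnorm_nonneg[OF nud] lipnorm_nonneg[OF u0]
            by (metis mult_le_one)
          finally show ?thesis unfolding u_def using lipdual_lin[OF nud g(1) h0, of 1 s] by simp
        qed
        have "t * \<nu> h \<le> 1 - \<nu> g" using ub[of t] t0 by simp
        moreover have "- t * \<nu> h \<le> 1 - \<nu> g" using ub[of "- t"] t0 by simp
        ultimately have nh: "\<bar>\<nu> h\<bar> \<le> (1 - \<nu> g) / t" using t0 by (simp add: abs_le_iff pos_le_divide_eq mult.commute)
        have nhv: "\<nu> h = \<nu> f - \<mu> f * \<nu> g" unfolding h_def using lipdual_lin[OF nud f g(1), of 1 "- \<mu> f"] by simp
        have eqd: "\<nu> f - \<mu> f = \<nu> h - \<mu> f * (1 - \<nu> g)" using nhv by (simp add: algebra_simps)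
        have "\<bar>\<nu> f - \<mu> f\<bar> = \<bar>\<nu> h - \<mu> f * (1 - \<nu> g)\<bar>" unfolding eqd ..
        also have "\<dots> \<le> \<bar>\<nu> h\<bar> + \<bar>\<mu> f * (1 - \<nu> g)\<bar>" by (rule abs_triangle_ineq4)
        also have "\<bar>\<nu> h\<bar> + \<bar>\<mu> f * (1 - \<nu> g)\<bar> = \<bar>\<nu> h\<bar> + \<bar>\<mu> f\<bar> * (1 - \<nu> g)" using nug by (simp add: abs_mult)
        also have "\<dots> \<le> (1 - \<nu> g) / t + Lf * (1 - \<nu> g)"
          using nh muf nug by (intro add_mono mult_right_mono) auto
        also have "\<dots> = K * (1 - \<nu> g) * lipnorm f"
          unfolding t_def K_def Lf_def[symmetric] using Lfp c0 by (simp add: field_simps)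
        finally show ?thesis .
      qed
    qed
  qed
  show ?thesis
    unfolding strongly_exposed_def
  proof (intro conjI bexI[of _ g] allI impI)
    show "\<mu> \<in> free_ball z" by (rule mub)
    show "g \<in> lip0 z" by (rule g(1))
    show "\<mu> g = lipnorm g" using mug lg by simp
  next
    fix s :: "nat \<Rightarrow> ('a \<Rightarrow> real) \<Rightarrow> real"
    assume sb: "\<forall>n. s n \<in> free_ball z" and sl: "(\<lambda>n. s n g) \<longlonglongrightarrow> \<mu> g"
    show "(\<lambda>n. dualnorm z (\<lambda>f. s n f - \<mu> f)) \<longlonglongrightarrow> 0"
    proof (rule real_tendsto_sandwich)
      show "\<forall>\<^sub>F n in sequentially. 0 \<le> dualnorm z (\<lambda>f. s n f - \<mu> f)"
        using sb by (intro always_eventually allI dualnorm_nonneg lipdual_diff_fun mud)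
          (auto simp: free_ball_def dual_ball_def)
      show "\<forall>\<^sub>F n in sequentially. dualnorm z (\<lambda>f. s n f - \<mu> f) \<le> K * (1 - s n g)"
        using sb by (intro always_eventually allI key) (auto simp: free_ball_def)
      show "(\<lambda>n. 0) \<longlonglongrightarrow> (0::real)" by simp
      have "(\<lambda>n. K * (1 - s n g)) \<longlonglongrightarrow> K * (1 - 1)"
        using sl mug by (intro tendsto_intros) simp
      thus "(\<lambda>n. K * (1 - s n g)) \<longlonglongrightarrow> 0" by simp
    qed
  qed
qed

theorem proposition5p3:
  fixes z :: "'a::metric_space" and \<mu> :: "('a \<Rightarrow> real) \<Rightarrow> real"
  assumes "uniformly_discrete TYPE('a)"
    and "preserved_extreme z \<mu>"
  shows "strongly_exposed z \<mu>"
proof (cases "\<exists>x0::'a. x0 \<noteq> z")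
  case True
  then obtain x0 where x0: "x0 \<noteq> z" by blast
  obtain x y where xy: "x \<noteq> y" "\<mu> = mol z x y" using is_molecule[OF assms x0] by blast
  obtain \<delta> where d: "\<delta> > 0" "\<forall>p. p \<noteq> x \<longrightarrow> p \<noteq> y \<longrightarrow> dist x y + \<delta> \<le> dist x p + dist p y"
    using gap[OF assms xy] by blast
  have mub: "\<mu> \<in> free_ball z" using assms(2) unfolding preserved_extreme_def by blast
  show ?thesis by (rule exposed[OF mub xy d(1)]) (use d(2) in blast)
next
  case False
  hence allz: "\<And>x::'a. x = z" by blast
  have mub: "\<mu> \<in> free_ball z" using assms(2) unfolding preserved_extreme_def by blast
  have mud: "\<mu> \<in> lipdual z" using mub unfolding free_ball_def dual_ball_def by blast
  have l0: "f = (\<lambda>x. 0)" if f: "f \<in> lip0 z" for f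
  proof
    fix x show "f x = 0" using lip0_zero[OF f] allz[of x] by simp
  qed
  have ln0: "lipnorm (\<lambda>x::'a. 0) = 0"
    using lipnorm_least[of "\<lambda>x::'a. 0" 0] lipnorm_nonneg[OF lip0_const0[of z]] by simp
  have dn0: "dualnorm z (\<lambda>f. \<nu> f - \<mu> f) = 0" if nu: "\<nu> \<in> lipdual z" for \<nu>
  proof -
    have "dualnorm z (\<lambda>f. \<nu> f - \<mu> f) \<le> 0"
    proof (rule dualnorm_le)
      fix f assume "f \<in> lip0 z"
      hence "f = (\<lambda>x. 0)" by (rule l0)
      thus "\<bar>\<nu> f - \<mu> f\<bar> \<le> 0 * lipnorm f" using lipdual_zero[OF nu] lipdual_zero[OF mud] by simp
    qed simp
    moreover have "0 \<le> dualnorm z (\<lambda>f. \<nu> f - \<mu> f)" by (intro dualnorm_nonneg lipdual_diff_fun nu mud)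
    ultimately show ?thesis by simp
  qed
  show ?thesis
    unfolding strongly_exposed_def
  proof (intro conjI bexI[of _ "\<lambda>x. 0"] allI impI)
    show "\<mu> \<in> free_ball z" by (rule mub)
    show "(\<lambda>x::'a. 0) \<in> lip0 z" by (rule lip0_const0)
    show "\<mu> (\<lambda>x. 0) = lipnorm (\<lambda>x::'a. 0)" using lipdual_zero[OF mud] ln0 by simp
  next
    fix s :: "nat \<Rightarrow> ('a \<Rightarrow> real) \<Rightarrow> real"
    assume sb: "\<forall>n. s n \<in> free_ball z"
    have "\<And>n. dualnorm z (\<lambda>f. s n f - \<mu> f) = 0"
      using sb dn0 unfolding free_ball_def dual_ball_def by blast
    thus "(\<lambda>n. dualnorm z (\<lambda>f. s n f - \<mu> f)) \<longlonglongrightarrow> 0" by simp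
  qed
qed


end
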